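(* Let $\mathfrak g=\mathfrak g_{-1}\oplus\mathfrak g_0\oplus\mathfrak g_1$ be a complex Lie superalgebra with $\dim\mathfrak g_{\bar1}<\infty$ and compatible $\mathbb Z$-grading, and let $M$ be a simple $\mathfrak g$-supermodule. Then there is a simple $\mathfrak g_0$-supermodule $N$ such that $M$ embeds into $\mathrm{Coind}_{\mathfrak g_{\geq0}}^{\mathfrak g}(N)$.
   Context: Compatible grading: $\mathfrak g_0=\mathfrak g_{\bar0}$, $\mathfrak g_{\bar1}=\mathfrak g_{-1}\oplus\mathfrak g_1$, $\mathfrak g_{\pm1}$ $\mathfrak g_0$-submodules, $[\mathfrak g_{\pm1},\mathfrak g_{\pm1}]=0$; $\mathfrak g_{\geq0}=\mathfrak g_0\oplus\mathfrak g_1$. Homomorphisms are even. $\mathrm{Coind}_{\mathfrak g_{\geq0}}^{\mathfrak g}(N)=\{f\in\mathrm{Hom}_{\mathbb C}(U(\mathfrak g),N)\mid f(pu)=pf(u)\ \forall p\in U(\mathfrak g_{\geq0})\}$ with $(xf)(u)=f(ux)$, where $\mathfrak g_1$ acts on $N$ by zero. *)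

theory Defs
  imports Complex_Main
begin

record 'a cvs =
  vcarrier :: "'a set"
  vadd :: "'a \<Rightarrow> 'a \<Rightarrow> 'a"
  vsmult :: "complex \<Rightarrow> 'a \<Rightarrow> 'a"
  vzero :: 'a

definition cvs :: "('a, 'b) cvs_scheme \<Rightarrow> bool" where
  "cvs V \<longleftrightarrow>
     vzero V \<in> vcarrier V \<and>
     (\<forall>x\<in>vcarrier V. \<forall>y\<in>vcarrier V. vadd V x y \<in> vcarrier V) \<and>
     (\<forall>a. \<forall>x\<in>vcarrier V. vsmult V a x \<in> vcarrier V) \<and>
     (\<forall>x\<in>vcarrier V. \<forall>y\<in>vcarrier V. \<forall>z\<in>vcarrier V.
         vadd V (vadd V x y) z = vadd V x (vadd V y z)) \<and>
     (\<forall>x\<in>vcarrier V. \<forall>y\<in>vcarrier V. vadd V x y = vadd V y x) \<and>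
     (\<forall>x\<in>vcarrier V. vadd V (vzero V) x = x) \<and>
     (\<forall>x\<in>vcarrier V. \<exists>y\<in>vcarrier V. vadd V x y = vzero V) \<and>
     (\<forall>a. \<forall>x\<in>vcarrier V. \<forall>y\<in>vcarrier V.
         vsmult V a (vadd V x y) = vadd V (vsmult V a x) (vsmult V a y)) \<and>
     (\<forall>a b. \<forall>x\<in>vcarrier V. vsmult V (a + b) x = vadd V (vsmult V a x) (vsmult V b x)) \<and>
     (\<forall>a b. \<forall>x\<in>vcarrier V. vsmult V (a * b) x = vsmult V a (vsmult V b x)) \<and>
     (\<forall>x\<in>vcarrier V. vsmult V 1 x = x)"

definition csubspace :: "('a, 'b) cvs_scheme \<Rightarrow> 'a set \<Rightarrow> bool" where
  "csubspace V S \<longleftrightarrow> S \<subseteq> vcarrier V \<and> vzero V \<in> S \<and>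
     (\<forall>x\<in>S. \<forall>y\<in>S. vadd V x y \<in> S) \<and> (\<forall>a. \<forall>x\<in>S. vsmult V a x \<in> S)"

definition ssum :: "('a, 'b) cvs_scheme \<Rightarrow> 'a set \<Rightarrow> 'a set \<Rightarrow> 'a set" where
  "ssum V S T = {vadd V a b | a b. a \<in> S \<and> b \<in> T}"

definition dsum :: "('a, 'b) cvs_scheme \<Rightarrow> 'a set \<Rightarrow> 'a set \<Rightarrow> 'a set \<Rightarrow> bool" where
  "dsum V S T U \<longleftrightarrow> csubspace V S \<and> csubspace V T \<and>
     (\<forall>x\<in>U. \<exists>!p. fst p \<in> S \<and> snd p \<in> T \<and> x = vadd V (fst p) (snd p)) \<and>
     ssum V S T \<subseteq> U"

definition lincomb :: "('a, 'b) cvs_scheme \<Rightarrow> (complex \<times> 'a) list \<Rightarrow> 'a" where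
  "lincomb V xs = foldr (\<lambda>(c, x) acc. vadd V (vsmult V c x) acc) xs (vzero V)"

definition fin_dim :: "('a, 'b) cvs_scheme \<Rightarrow> 'a set \<Rightarrow> bool" where
  "fin_dim V S \<longleftrightarrow> (\<exists>bs. set bs \<subseteq> S \<and>
     (\<forall>x\<in>S. \<exists>cs. length cs = length bs \<and> x = lincomb V (zip cs bs)))"

text \<open>Parities are booleans (True = odd).  \<open>hpart Ev Od p\<close> is the homogeneous part
  of parity \<open>p\<close>; \<open>ssgn p q = (-1)^(p q)\<close>.\<close>
definition hpart :: "'a set \<Rightarrow> 'a set \<Rightarrow> bool \<Rightarrow> 'a set" where
  "hpart Ev Od p = (if p then Od else Ev)"

definition ssgn :: "bool \<Rightarrow> bool \<Rightarrow> complex" where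
  "ssgn p q = (if p \<and> q then -1 else 1)"

definition lie_salg :: "'g cvs \<Rightarrow> ('g \<Rightarrow> 'g \<Rightarrow> 'g) \<Rightarrow> 'g set \<Rightarrow> 'g set \<Rightarrow> bool" where
  "lie_salg G br Ev Od \<longleftrightarrow> cvs G \<and> dsum G Ev Od (vcarrier G) \<and>
     (\<forall>x\<in>vcarrier G. \<forall>y\<in>vcarrier G. br x y \<in> vcarrier G) \<and>
     (\<forall>a b. \<forall>x\<in>vcarrier G. \<forall>y\<in>vcarrier G. \<forall>z\<in>vcarrier G.
        br (vadd G (vsmult G a x) (vsmult G b y)) z = vadd G (vsmult G a (br x z)) (vsmult G b (br y z)) \<and>
        br z (vadd G (vsmult G a x) (vsmult G b y)) = vadd G (vsmult G a (br z x)) (vsmult G b (br z y))) \<and>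
     (\<forall>p q x y. x \<in> hpart Ev Od p \<longrightarrow> y \<in> hpart Ev Od q \<longrightarrow> br x y \<in> hpart Ev Od (p \<noteq> q)) \<and>
     (\<forall>p q x y. x \<in> hpart Ev Od p \<longrightarrow> y \<in> hpart Ev Od q \<longrightarrow>
        br x y = vsmult G (- ssgn p q) (br y x)) \<and>
     (\<forall>p q r x y z. x \<in> hpart Ev Od p \<longrightarrow> y \<in> hpart Ev Od q \<longrightarrow> z \<in> hpart Ev Od r \<longrightarrow>
        br x (br y z) = vadd G (br (br x y) z) (vsmult G (ssgn p q) (br y (br x z))))"

text \<open>Complex Lie superalgebra \<open>g = g_{-1} \<oplus> g_0 \<oplus> g_1\<close> with compatible \<open>\<int>\<close>-grading:
  \<open>g_0\<close> is the even part, the odd part is \<open>g_{-1} \<oplus> g_1\<close>, \<open>g_{\<pm>1}\<close> are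
  \<open>g_0\<close>-submodules and \<open>[g_{\<pm>1}, g_{\<pm>1}] = 0\<close>.\<close>
definition zgraded_lsa ::
  "'g cvs \<Rightarrow> ('g \<Rightarrow> 'g \<Rightarrow> 'g) \<Rightarrow> 'g set \<Rightarrow> 'g set \<Rightarrow> 'g set \<Rightarrow> bool" where
  "zgraded_lsa G br gm g0 gp \<longleftrightarrow>
     lie_salg G br g0 (ssum G gm gp) \<and> dsum G gm gp (ssum G gm gp) \<and>
     (\<forall>x\<in>g0. \<forall>y\<in>gm. br x y \<in> gm) \<and> (\<forall>x\<in>g0. \<forall>y\<in>gp. br x y \<in> gp) \<and>
     (\<forall>x\<in>gm. \<forall>y\<in>gm. br x y = vzero G) \<and> (\<forall>x\<in>gp. \<forall>y\<in>gp. br x y = vzero G)"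

record ('a, 'g) smod = "'a cvs" +
  spar0 :: "'a set"
  spar1 :: "'a set"
  sact :: "'g \<Rightarrow> 'a \<Rightarrow> 'a"

text \<open>\<open>V\<close> is a supermodule over the Lie sub-superalgebra of \<open>G\<close> with even part \<open>Ev\<close>
  and odd part \<open>Od\<close> (the acting algebra is \<open>Ev \<oplus> Od\<close>).\<close>
definition smod :: "'g cvs \<Rightarrow> ('g \<Rightarrow> 'g \<Rightarrow> 'g) \<Rightarrow> 'g set \<Rightarrow> 'g set \<Rightarrow> ('a, 'g) smod \<Rightarrow> bool" where
  "smod G br Ev Od V \<longleftrightarrow> cvs V \<and> dsum V (spar0 V) (spar1 V) (vcarrier V) \<and>
     (\<forall>x\<in>ssum G Ev Od. \<forall>v\<in>vcarrier V. sact V x v \<in> vcarrier V) \<and>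
     (\<forall>x\<in>ssum G Ev Od. \<forall>a b. \<forall>v\<in>vcarrier V. \<forall>w\<in>vcarrier V.
        sact V x (vadd V (vsmult V a v) (vsmult V b w)) =
        vadd V (vsmult V a (sact V x v)) (vsmult V b (sact V x w))) \<and>
     (\<forall>x\<in>ssum G Ev Od. \<forall>y\<in>ssum G Ev Od. \<forall>a b. \<forall>v\<in>vcarrier V.
        sact V (vadd G (vsmult G a x) (vsmult G b y)) v =
        vadd V (vsmult V a (sact V x v)) (vsmult V b (sact V y v))) \<and>
     (\<forall>p q x v. x \<in> hpart Ev Od p \<longrightarrow> v \<in> hpart (spar0 V) (spar1 V) q \<longrightarrow>
        sact V x v \<in> hpart (spar0 V) (spar1 V) (p \<noteq> q)) \<and>
     (\<forall>p q x y. \<forall>v\<in>vcarrier V. x \<in> hpart Ev Od p \<longrightarrow> y \<in> hpart Ev Od q \<longrightarrow>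
        sact V (br x y) v =
        vadd V (sact V x (sact V y v)) (vsmult V (- ssgn p q) (sact V y (sact V x v))))"

definition sub_smod :: "'g cvs \<Rightarrow> 'g set \<Rightarrow> 'g set \<Rightarrow> ('a, 'g) smod \<Rightarrow> 'a set \<Rightarrow> bool" where
  "sub_smod G Ev Od V W \<longleftrightarrow> csubspace V W \<and>
     (\<forall>w\<in>W. \<forall>a b. a \<in> spar0 V \<longrightarrow> b \<in> spar1 V \<longrightarrow> w = vadd V a b \<longrightarrow> a \<in> W \<and> b \<in> W) \<and>
     (\<forall>x\<in>ssum G Ev Od. \<forall>w\<in>W. sact V x w \<in> W)"

definition simple_smod ::
  "'g cvs \<Rightarrow> ('g \<Rightarrow> 'g \<Rightarrow> 'g) \<Rightarrow> 'g set \<Rightarrow> 'g set \<Rightarrow> ('a, 'g) smod \<Rightarrow> bool" where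
  "simple_smod G br Ev Od V \<longleftrightarrow> smod G br Ev Od V \<and> vcarrier V \<noteq> {vzero V} \<and>
     (\<forall>W. sub_smod G Ev Od V W \<longrightarrow> W = {vzero V} \<or> W = vcarrier V)"

definition smod_hom ::
  "'g cvs \<Rightarrow> 'g set \<Rightarrow> 'g set \<Rightarrow> ('a, 'g) smod \<Rightarrow> ('b, 'g) smod \<Rightarrow> ('a \<Rightarrow> 'b) \<Rightarrow> bool" where
  "smod_hom G Ev Od V W \<phi> \<longleftrightarrow>
     (\<forall>v\<in>vcarrier V. \<phi> v \<in> vcarrier W) \<and>
     (\<forall>u\<in>vcarrier V. \<forall>v\<in>vcarrier V. \<phi> (vadd V u v) = vadd W (\<phi> u) (\<phi> v)) \<and>
     (\<forall>a. \<forall>v\<in>vcarrier V. \<phi> (vsmult V a v) = vsmult W a (\<phi> v)) \<and>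
     \<phi> ` spar0 V \<subseteq> spar0 W \<and> \<phi> ` spar1 V \<subseteq> spar1 W \<and>
     (\<forall>x\<in>ssum G Ev Od. \<forall>v\<in>vcarrier V. \<phi> (sact V x v) = sact W x (\<phi> v))"

text \<open>A linear map \<open>U(g) \<rightarrow> N\<close> is encoded by its values on the monomials
  \<open>x_1 \<cdots> x_n\<close>, i.e. by a function on words \<open>'g list\<close> that is multilinear in each
  letter and respects the defining relations \<open>xy - (-1)^{|x||y|} yx = [x,y]\<close> of
  \<open>U(g)\<close> (universal property of \<open>U(g) = T(g)/I\<close>).  Words with letters outside the
  carrier are sent to zero (normalisation).\<close>

definition hom_Ug :: "'g cvs \<Rightarrow> ('g \<Rightarrow> 'g \<Rightarrow> 'g) \<Rightarrow> 'g set \<Rightarrow> 'g set \<Rightarrow> ('c, 'x) cvs_scheme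
     \<Rightarrow> ('g list \<Rightarrow> 'c) set" where
  "hom_Ug G br Ev Od N = {f.
     (\<forall>w. f w \<in> vcarrier N) \<and>
     (\<forall>w. \<not> set w \<subseteq> vcarrier G \<longrightarrow> f w = vzero N) \<and>
     (\<forall>u v a b. \<forall>x\<in>vcarrier G. \<forall>y\<in>vcarrier G.
        f (u @ [vadd G (vsmult G a x) (vsmult G b y)] @ v) =
        vadd N (vsmult N a (f (u @ [x] @ v))) (vsmult N b (f (u @ [y] @ v)))) \<and>
     (\<forall>u v p q x y. x \<in> hpart Ev Od p \<longrightarrow> y \<in> hpart Ev Od q \<longrightarrow>
        f (u @ [x, y] @ v) = vadd N (vsmult N (ssgn p q) (f (u @ [y, x] @ v))) (f (u @ [br x y] @ v)))}"

fun hword :: "'g set \<Rightarrow> 'g set \<Rightarrow> 'g list \<Rightarrow> bool \<Rightarrow> bool" where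
  "hword Ev Od [] p = (\<not> p)"
| "hword Ev Od (x # w) p = (\<exists>q. x \<in> hpart Ev Od q \<and> hword Ev Od w (p \<noteq> q))"

text \<open>\<open>Coind_{g_{\<ge>0}}^g(N)\<close> for a \<open>g_0\<close>-supermodule \<open>N\<close> (with \<open>g_1\<close> acting by zero):
  \<open>f(pu) = p f(u)\<close> for \<open>p \<in> U(g_{\<ge>0})\<close>, which (by linearity and multiplicativity)
  amounts to \<open>f(xu) = x f(u)\<close> for \<open>x \<in> g_0\<close> and \<open>f(xu) = 0\<close> for \<open>x \<in> g_1\<close>;
  \<open>g\<close> acts by \<open>(xf)(u) = f(ux)\<close>.\<close>
definition coind ::
  "'g cvs \<Rightarrow> ('g \<Rightarrow> 'g \<Rightarrow> 'g) \<Rightarrow> 'g set \<Rightarrow> 'g set \<Rightarrow> 'g set \<Rightarrow> ('c, 'g) smod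
     \<Rightarrow> ('g list \<Rightarrow> 'c, 'g) smod" where
  "coind G br gm g0 gp N =
     (let Ev = g0; Od = ssum G gm gp;
          C = {f \<in> hom_Ug G br Ev Od N.
                 (\<forall>x\<in>g0. \<forall>u. f (x # u) = sact N x (f u)) \<and>
                 (\<forall>x\<in>gp. \<forall>u. f (x # u) = vzero N)}
      in \<lparr> vcarrier = C,
           vadd = (\<lambda>f g w. vadd N (f w) (g w)),
           vsmult = (\<lambda>a f w. vsmult N a (f w)),
           vzero = (\<lambda>w. vzero N),
           spar0 = {f \<in> C. \<forall>w p. hword Ev Od w p \<longrightarrow> f w \<in> hpart (spar0 N) (spar1 N) p},
           spar1 = {f \<in> C. \<forall>w p. hword Ev Od w p \<longrightarrow> f w \<in> hpart (spar0 N) (spar1 N) (\<not> p)},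
           sact = (\<lambda>x f w. f (w @ [x])) \<rparr>)"

end

theory Submission
  imports Defs
begin
locale cv = fixes V :: "('a,'b) cvs_scheme" assumes cv: "cvs V"
begin
abbreviation "C \<equiv> vcarrier V"
abbreviation "ad \<equiv> vadd V"
abbreviation "sm \<equiv> vsmult V"
abbreviation "zr \<equiv> vzero V"

lemma cvs_parts:
  "zr \<in> C" "\<forall>x\<in>C. \<forall>y\<in>C. ad x y \<in> C" "\<forall>a. \<forall>x\<in>C. sm a x \<in> C"
  "\<forall>x\<in>C. \<forall>y\<in>C. \<forall>z\<in>C. ad (ad x y) z = ad x (ad y z)"
  "\<forall>x\<in>C. \<forall>y\<in>C. ad x y = ad y x" "\<forall>x\<in>C. ad zr x = x"
  "\<forall>x\<in>C. \<exists>y\<in>C. ad x y = zr"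
  "\<forall>a. \<forall>x\<in>C. \<forall>y\<in>C. sm a (ad x y) = ad (sm a x) (sm a y)"
  "\<forall>a b. \<forall>x\<in>C. sm (a + b) x = ad (sm a x) (sm b x)"
  "\<forall>a b. \<forall>x\<in>C. sm (a * b) x = sm a (sm b x)"
  "\<forall>x\<in>C. sm 1 x = x"
  using cv unfolding cvs_def by auto

lemma zero_in[simp]: "zr \<in> C" using cvs_parts(1) .
lemma add_in[simp]: "x \<in> C \<Longrightarrow> y \<in> C \<Longrightarrow> ad x y \<in> C" using cvs_parts(2) by blast
lemma sm_in[simp]: "x \<in> C \<Longrightarrow> sm a x \<in> C" using cvs_parts(3) by blast
lemma assoc: "x \<in> C \<Longrightarrow> y \<in> C \<Longrightarrow> z \<in> C \<Longrightarrow> ad (ad x y) z = ad x (ad y z)"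
  using cvs_parts(4) by blast
lemma comm: "x \<in> C \<Longrightarrow> y \<in> C \<Longrightarrow> ad x y = ad y x" using cvs_parts(5) by blast
lemma zero_add[simp]: "x \<in> C \<Longrightarrow> ad zr x = x" using cvs_parts(6) by blast
lemma add_zero[simp]: "x \<in> C \<Longrightarrow> ad x zr = x" using comm[of x zr] by simp
lemma inv_ex: "x \<in> C \<Longrightarrow> \<exists>y\<in>C. ad x y = zr" using cvs_parts(7) by blast
lemma sm_add: "x \<in> C \<Longrightarrow> y \<in> C \<Longrightarrow> sm a (ad x y) = ad (sm a x) (sm a y)"
  using cvs_parts(8) by blast
lemma add_sm: "x \<in> C \<Longrightarrow> sm (a + b) x = ad (sm a x) (sm b x)"
  using cvs_parts(9) by blast
lemma sm_sm: "x \<in> C \<Longrightarrow> sm (a * b) x = sm a (sm b x)"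
  using cvs_parts(10) by blast
lemma sm_one[simp]: "x \<in> C \<Longrightarrow> sm 1 x = x" using cvs_parts(11) by blast

lemma lcomm: "x \<in> C \<Longrightarrow> y \<in> C \<Longrightarrow> z \<in> C \<Longrightarrow> ad x (ad y z) = ad y (ad x z)"
  using assoc[of x y z] assoc[of y x z] comm[of x y] by simp

lemma cancel_left:
  assumes "x \<in> C" "y \<in> C" "z \<in> C" "ad x y = ad x z" shows "y = z"
proof -
  obtain n where n: "n \<in> C" "ad x n = zr" using inv_ex assms(1) by blast
  have "ad n (ad x y) = ad n (ad x z)" using assms by simp
  then have "ad (ad n x) y = ad (ad n x) z" using assoc n assms by simp
  then show ?thesis using n assms comm[of n x] by simp
qed

lemma sm_zero_scalar[simp]: "x \<in> C \<Longrightarrow> sm 0 x = zr"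
proof -
  assume x: "x \<in> C"
  have "ad (sm 0 x) (sm 0 x) = ad (sm 0 x) zr" using add_sm[OF x, of 0 0] x by simp
  then show ?thesis using cancel_left[of "sm 0 x" "sm 0 x" zr] x by simp
qed

lemma sm_zero[simp]: "sm a zr = zr"
proof -
  have "ad (sm a zr) (sm a zr) = ad (sm a zr) zr" using sm_add[of zr zr a] by simp
  then show ?thesis using cancel_left[of "sm a zr" "sm a zr" zr] by simp
qed

lemma add_neg[simp]: "x \<in> C \<Longrightarrow> ad x (sm (-1) x) = zr"
proof -
  assume x: "x \<in> C"
  have "sm (1 + -1) x = zr" using x by simp
  then show ?thesis using add_sm[OF x, of 1 "-1"] x by simp
qed

lemma neg_unique: "x \<in> C \<Longrightarrow> y \<in> C \<Longrightarrow> ad x y = zr \<Longrightarrow> y = sm (-1) x"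
  using cancel_left[of x y "sm (-1) x"] by simp

lemma eq_sub: "a \<in> C \<Longrightarrow> b \<in> C \<Longrightarrow> c \<in> C \<Longrightarrow> a = ad b c \<Longrightarrow> b = ad a (sm (-1) c)"
  using assoc[of b c "sm (-1) c"] by simp

lemma sm_neg_neg: "x \<in> C \<Longrightarrow> sm (-1) (sm (-1) x) = x"
  using sm_sm[of x "-1" "-1"] by simp

lemma double_zero: "x \<in> C \<Longrightarrow> ad x x = zr \<Longrightarrow> x = zr"
proof -
  assume x: "x \<in> C" "ad x x = zr"
  have "sm (1/2) (ad x x) = ad (sm (1/2) x) (sm (1/2) x)" using x(1) sm_add by simp
  also have "\<dots> = sm (1/2 + 1/2) x" using x(1) add_sm[of x "1/2" "1/2"] by simp
  finally show ?thesis using x by simp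
qed

lemma sm_lin: "x \<in> C \<Longrightarrow> y \<in> C \<Longrightarrow> ad (sm a x) (sm a y) = sm a (ad x y)" using sm_add by simp

lemma swap4: "a \<in> C \<Longrightarrow> b \<in> C \<Longrightarrow> c \<in> C \<Longrightarrow> d \<in> C \<Longrightarrow>
   ad (ad a b) (ad c d) = ad (ad a c) (ad b d)"
  using assoc[of a b "ad c d"] assoc[of a c "ad b d"] lcomm[of b c d] by simp

end

inductive_set span :: "('a,'b) cvs_scheme \<Rightarrow> 'a set \<Rightarrow> 'a set" for V S where
  span_zero: "vzero V \<in> span V S"
| span_gen: "x \<in> S \<Longrightarrow> x \<in> span V S"
| span_add: "x \<in> span V S \<Longrightarrow> y \<in> span V S \<Longrightarrow> vadd V x y \<in> span V S"
| span_sm: "x \<in> span V S \<Longrightarrow> vsmult V a x \<in> span V S"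

context cv begin
lemma span_sub: "S \<subseteq> C \<Longrightarrow> span V S \<subseteq> C"
proof
  fix x assume S: "S \<subseteq> C" and x: "x \<in> span V S" show "x \<in> C" using x by induction (use S in auto)
qed
lemma csub_span: "S \<subseteq> C \<Longrightarrow> csubspace V (span V S)"
  unfolding csubspace_def using span_sub by (auto intro: span.intros)
lemma span_min: "csubspace V Q \<Longrightarrow> S \<subseteq> Q \<Longrightarrow> span V S \<subseteq> Q"
proof
  fix x assume Q: "csubspace V Q" "S \<subseteq> Q" and x: "x \<in> span V S" show "x \<in> Q"
    using x by induction (use Q in \<open>auto simp: csubspace_def\<close>)
qed
lemma span_mono: "S \<subseteq> T \<Longrightarrow> T \<subseteq> C \<Longrightarrow> span V S \<subseteq> span V T"
proof -
  assume "S \<subseteq> T" "T \<subseteq> C"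
  then show ?thesis using span_min[OF csub_span[of T], of S] span_gen[of _ T V] by blast
qed
lemma lincomb_span: "set bs \<subseteq> C \<Longrightarrow> lincomb V (zip cs bs) \<in> span V (set bs)"
proof (induction bs arbitrary: cs)
  case Nil then show ?case by (simp add: lincomb_def span_zero)
next
  case (Cons b bs)
  then show ?case
  proof (cases cs)
    case Nil then show ?thesis by (simp add: lincomb_def span_zero)
  next
    case (Cons c cs')
    have "lincomb V (zip cs' bs) \<in> span V (set (b#bs))"
      using Cons.IH[of cs'] Cons.prems span_mono[of "set bs" "set (b#bs)"] by auto
    moreover have "b \<in> span V (set (b#bs))" by (rule span.span_gen) simp
    ultimately show ?thesis using Cons unfolding lincomb_def by (auto intro!: span_add span_sm)
  qed
qed
end

lemma lin_span:
  assumes V: "cv V" and W: "cv W" and S: "S \<subseteq> vcarrier V"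
  and fC: "\<forall>x\<in>vcarrier V. f x \<in> vcarrier W"
  and fadd: "\<forall>x\<in>vcarrier V. \<forall>y\<in>vcarrier V. f (vadd V x y) = vadd W (f x) (f y)"
  and fsm: "\<forall>a. \<forall>x\<in>vcarrier V. f (vsmult V a x) = vsmult W a (f x)"
  and T: "csubspace W T" and ST: "\<forall>s\<in>S. f s \<in> T"
  and x: "x \<in> span V S"
  shows "f x \<in> T"
  using x
proof (induction rule: span.induct)
  case span_zero
  have "f (vzero V) = f (vsmult V 0 (vzero V))" using cv.sm_zero_scalar[OF V] cv.zero_in[OF V] by simp
  also have "\<dots> = vzero W" using fsm fC cv.zero_in[OF V] cv.sm_zero_scalar[OF W] by simp
  finally show ?case using T by (simp add: csubspace_def)
next
  case (span_gen x) then show ?case using ST by auto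
next
  case (span_add x y)
  have "x \<in> vcarrier V" "y \<in> vcarrier V" using span_add cv.span_sub[OF V S] by auto
  then show ?case using span_add fadd T by (simp add: csubspace_def)
next
  case (span_sm x a)
  have "x \<in> vcarrier V" using span_sm cv.span_sub[OF V S] by auto
  then show ?case using span_sm fsm T by (simp add: csubspace_def)
qed

lemma dsum_uq: "dsum V S T U \<Longrightarrow> \<forall>x\<in>U. \<exists>!p. fst p \<in> S \<and> snd p \<in> T \<and> x = vadd V (fst p) (snd p)"
  unfolding dsum_def by (elim conjE) assumption

lemma dsum_unique:
  assumes "dsum V S T U" "a \<in> S" "a' \<in> S" "b \<in> T" "b' \<in> T" "vadd V a b = vadd V a' b'"
    "vadd V a b \<in> U"
  shows "a = a' \<and> b = b'"
proof -
  have "\<exists>!p. fst p \<in> S \<and> snd p \<in> T \<and> vadd V a b = vadd V (fst p) (snd p)"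
    using dsum_uq[OF assms(1)] assms(7) by blast
  then have "(a,b) = (a',b')" using assms(2-6) by (metis fst_conv snd_conv)
  then show ?thesis by auto
qed

lemma dsum_ex: assumes "dsum V S T U" "x \<in> U" shows "\<exists>a\<in>S. \<exists>b\<in>T. x = vadd V a b"
proof -
  have "\<exists>!p. fst p \<in> S \<and> snd p \<in> T \<and> x = vadd V (fst p) (snd p)"
    using dsum_uq[OF assms(1)] assms(2) by blast
  then obtain p where "fst p \<in> S \<and> snd p \<in> T \<and> x = vadd V (fst p) (snd p)" by blast
  then show ?thesis by blast
qed

lemma hpart_simps[simp]: "hpart Ev Od False = Ev" "hpart Ev Od True = Od"
  by (auto simp: hpart_def)

lemma ssgn_simps[simp]: "ssgn False q = 1" "ssgn p False = 1" "ssgn True True = -1"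
  by (auto simp: ssgn_def)

definition actw :: "('m,'g) smod \<Rightarrow> 'g list \<Rightarrow> 'm \<Rightarrow> 'm" where
  "actw M w v = foldr (sact M) w v"

lemma actw_simps[simp]: "actw M [] v = v" "actw M (x#w) v = sact M x (actw M w v)"
  "actw M (w@u) v = actw M w (actw M u v)"
  by (auto simp: actw_def)

locale LS =
  fixes G :: "'g cvs" and br :: "'g \<Rightarrow> 'g \<Rightarrow> 'g" and gm g0 gp :: "'g set"
    and M :: "('m, 'g) smod"
  assumes zg: "zgraded_lsa G br gm g0 gp"
    and fd: "fin_dim G (ssum G gm gp)"
    and simpM: "simple_smod G br g0 (ssum G gm gp) M"
begin

abbreviation "Od \<equiv> ssum G gm gp"
abbreviation "CG \<equiv> vcarrier G"
abbreviation "CM \<equiv> vcarrier M"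
abbreviation "addG \<equiv> vadd G"
abbreviation "smG \<equiv> vsmult G"
abbreviation "zG \<equiv> vzero G"
abbreviation "addM \<equiv> vadd M"
abbreviation "smM \<equiv> vsmult M"
abbreviation "zM \<equiv> vzero M"
abbreviation "act \<equiv> actw M"
abbreviation "P0 \<equiv> spar0 M"
abbreviation "P1 \<equiv> spar1 M"

lemma lie: "lie_salg G br g0 Od" using zg unfolding zgraded_lsa_def by (elim conjE) assumption
lemma smodM: "smod G br g0 Od M" using simpM unfolding simple_smod_def by (elim conjE) assumption
lemma cvG: "cv G" using lie unfolding lie_salg_def cv_def by (elim conjE) assumption
lemma cvM: "cv M" using smodM unfolding smod_def cv_def by (elim conjE) assumption

sublocale G: cv G by (rule cvG)
sublocale M: cv M by (rule cvM)

lemma dsG: "dsum G g0 Od CG" using lie unfolding lie_salg_def by (elim conjE) assumption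
lemma dsOd: "dsum G gm gp Od" using zg unfolding zgraded_lsa_def by (elim conjE) assumption
lemma dsM: "dsum M P0 P1 CM" using smodM unfolding smod_def by (elim conjE) assumption

lemma csub_g0: "csubspace G g0" using dsG unfolding dsum_def by (elim conjE) assumption
lemma csub_Od: "csubspace G Od" using dsG unfolding dsum_def by (elim conjE) assumption
lemma csub_gm: "csubspace G gm" using dsOd unfolding dsum_def by (elim conjE) assumption
lemma csub_gp: "csubspace G gp" using dsOd unfolding dsum_def by (elim conjE) assumption
lemma csub_P0: "csubspace M P0" using dsM unfolding dsum_def by (elim conjE) assumption
lemma csub_P1: "csubspace M P1" using dsM unfolding dsum_def by (elim conjE) assumption

lemma csubD: assumes "csubspace V S" shows "S \<subseteq> vcarrier V" "vzero V \<in> S"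
  "x \<in> S \<Longrightarrow> y \<in> S \<Longrightarrow> vadd V x y \<in> S" "x \<in> S \<Longrightarrow> vsmult V a x \<in> S"
  using assms unfolding csubspace_def by auto

lemma g0_sub: "g0 \<subseteq> CG" using csubD(1)[OF csub_g0] .
lemma Od_sub: "Od \<subseteq> CG" using csubD(1)[OF csub_Od] .
lemma gm_sub: "gm \<subseteq> CG" using csubD(1)[OF csub_gm] .
lemma gp_sub: "gp \<subseteq> CG" using csubD(1)[OF csub_gp] .
lemma P0_sub: "P0 \<subseteq> CM" using csubD(1)[OF csub_P0] .
lemma P1_sub: "P1 \<subseteq> CM" using csubD(1)[OF csub_P1] .

lemma gm_Od: "gm \<subseteq> Od"
proof
  fix x assume x: "x \<in> gm"
  then have "x = addG x zG" using gm_sub by auto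
  then show "x \<in> Od" unfolding ssum_def using x csubD(2)[OF csub_gp] by blast
qed
lemma gp_Od: "gp \<subseteq> Od"
proof
  fix x assume x: "x \<in> gp"
  then have "x = addG zG x" using gp_sub by auto
  then show "x \<in> Od" unfolding ssum_def using x csubD(2)[OF csub_gm] by blast
qed

lemma CG_ssum: "CG = ssum G g0 Od"
proof
  show "CG \<subseteq> ssum G g0 Od" using dsum_ex[OF dsG] unfolding ssum_def by blast
  show "ssum G g0 Od \<subseteq> CG" using dsG unfolding dsum_def by (elim conjE) assumption
qed

lemma decompG: "x \<in> CG \<Longrightarrow> \<exists>a\<in>g0. \<exists>b\<in>Od. x = addG a b" using dsum_ex[OF dsG] by blast
lemma decompOd: "x \<in> Od \<Longrightarrow> \<exists>a\<in>gm. \<exists>b\<in>gp. x = addG a b" unfolding ssum_def by blast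
lemma decompM: "v \<in> CM \<Longrightarrow> \<exists>a\<in>P0. \<exists>b\<in>P1. v = addM a b" using dsum_ex[OF dsM] by blast

lemma hpartG_sub: "hpart g0 Od p \<subseteq> CG" using g0_sub Od_sub by (cases p) auto
lemma hpartM_sub: "hpart P0 P1 p \<subseteq> CM" using P0_sub P1_sub by (cases p) auto

lemma sm_ax1: "\<forall>x\<in>ssum G g0 Od. \<forall>v\<in>CM. sact M x v \<in> CM"
  using smodM unfolding smod_def by (elim conjE) assumption
lemma sm_ax2: "\<forall>x\<in>ssum G g0 Od. \<forall>a b. \<forall>v\<in>CM. \<forall>w\<in>CM.
        sact M x (addM (smM a v) (smM b w)) = addM (smM a (sact M x v)) (smM b (sact M x w))"
  using smodM unfolding smod_def by (elim conjE) assumption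
lemma sm_ax3: "\<forall>x\<in>ssum G g0 Od. \<forall>y\<in>ssum G g0 Od. \<forall>a b. \<forall>v\<in>CM.
        sact M (addG (smG a x) (smG b y)) v = addM (smM a (sact M x v)) (smM b (sact M y v))"
  using smodM unfolding smod_def by (elim conjE) assumption
lemma sm_ax4: "\<forall>p q x v. x \<in> hpart g0 Od p \<longrightarrow> v \<in> hpart P0 P1 q \<longrightarrow>
        sact M x v \<in> hpart P0 P1 (p \<noteq> q)"
  using smodM unfolding smod_def by (elim conjE) assumption
lemma sm_ax5: "\<forall>p q x y. \<forall>v\<in>CM. x \<in> hpart g0 Od p \<longrightarrow> y \<in> hpart g0 Od q \<longrightarrow>
        sact M (br x y) v = addM (sact M x (sact M y v)) (smM (- ssgn p q) (sact M y (sact M x v)))"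
  using smodM unfolding smod_def by (elim conjE) assumption

lemma sact_in[simp]: "x \<in> CG \<Longrightarrow> v \<in> CM \<Longrightarrow> sact M x v \<in> CM"
  using sm_ax1 unfolding CG_ssum[symmetric] by blast

lemma sact_lin: "x \<in> CG \<Longrightarrow> v \<in> CM \<Longrightarrow> w \<in> CM \<Longrightarrow>
   sact M x (addM (smM a v) (smM b w)) = addM (smM a (sact M x v)) (smM b (sact M x w))"
  using sm_ax2 unfolding CG_ssum[symmetric] by blast

lemma sact_add: "x \<in> CG \<Longrightarrow> v \<in> CM \<Longrightarrow> w \<in> CM \<Longrightarrow>
   sact M x (addM v w) = addM (sact M x v) (sact M x w)"
  using sact_lin[of x v w 1 1] by simp

lemma sact_zero[simp]: "x \<in> CG \<Longrightarrow> sact M x zM = zM"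
  using sact_lin[of x zM zM 0 0] by simp

lemma sact_sm: "x \<in> CG \<Longrightarrow> v \<in> CM \<Longrightarrow> sact M x (smM a v) = smM a (sact M x v)"
  using sact_lin[of x v zM a 0] by simp

lemma sact_linx: "x \<in> CG \<Longrightarrow> y \<in> CG \<Longrightarrow> v \<in> CM \<Longrightarrow>
   sact M (addG (smG a x) (smG b y)) v = addM (smM a (sact M x v)) (smM b (sact M y v))"
  using sm_ax3 unfolding CG_ssum[symmetric] by blast

lemma sact_addx: "x \<in> CG \<Longrightarrow> y \<in> CG \<Longrightarrow> v \<in> CM \<Longrightarrow>
   sact M (addG x y) v = addM (sact M x v) (sact M y v)"
  using sact_linx[of x y v 1 1] by simp

lemma sact_zerox[simp]: "v \<in> CM \<Longrightarrow> sact M zG v = zM"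
  using sact_linx[of zG zG v 0 0] by simp

lemma sact_smx: "x \<in> CG \<Longrightarrow> v \<in> CM \<Longrightarrow> sact M (smG a x) v = smM a (sact M x v)"
  using sact_linx[of x zG v a 0] by simp

lemma sact_par: "x \<in> hpart g0 Od p \<Longrightarrow> v \<in> hpart P0 P1 q \<Longrightarrow> sact M x v \<in> hpart P0 P1 (p \<noteq> q)"
  using sm_ax4 by blast

lemma sact_br: "x \<in> hpart g0 Od p \<Longrightarrow> y \<in> hpart g0 Od q \<Longrightarrow> v \<in> CM \<Longrightarrow>
   sact M (br x y) v = addM (sact M x (sact M y v)) (smM (- ssgn p q) (sact M y (sact M x v)))"
  using sm_ax5 by blast

lemma la1: "\<forall>x\<in>CG. \<forall>y\<in>CG. br x y \<in> CG"
  using lie unfolding lie_salg_def by (elim conjE) assumption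
lemma la2: "\<forall>p q x y. x \<in> hpart g0 Od p \<longrightarrow> y \<in> hpart g0 Od q \<longrightarrow> br x y \<in> hpart g0 Od (p \<noteq> q)"
  using lie unfolding lie_salg_def by (elim conjE) assumption
lemma la3: "\<forall>p q x y. x \<in> hpart g0 Od p \<longrightarrow> y \<in> hpart g0 Od q \<longrightarrow>
        br x y = smG (- ssgn p q) (br y x)"
  using lie unfolding lie_salg_def by (elim conjE) assumption
lemma br_in: "x \<in> CG \<Longrightarrow> y \<in> CG \<Longrightarrow> br x y \<in> CG" using la1 by blast
lemma br_par: "x \<in> hpart g0 Od p \<Longrightarrow> y \<in> hpart g0 Od q \<Longrightarrow> br x y \<in> hpart g0 Od (p \<noteq> q)"
  using la2 by blast
lemma br_anti: "x \<in> hpart g0 Od p \<Longrightarrow> y \<in> hpart g0 Od q \<Longrightarrow> br x y = smG (- ssgn p q) (br y x)"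
  using la3 by blast
lemma zg1: "\<forall>x\<in>g0. \<forall>y\<in>gm. br x y \<in> gm" using zg unfolding zgraded_lsa_def by (elim conjE) assumption
lemma zg2: "\<forall>x\<in>g0. \<forall>y\<in>gp. br x y \<in> gp" using zg unfolding zgraded_lsa_def by (elim conjE) assumption
lemma zg3: "\<forall>x\<in>gm. \<forall>y\<in>gm. br x y = zG" using zg unfolding zgraded_lsa_def by (elim conjE) assumption
lemma zg4: "\<forall>x\<in>gp. \<forall>y\<in>gp. br x y = zG" using zg unfolding zgraded_lsa_def by (elim conjE) assumption
lemma br_g0gm: "x \<in> g0 \<Longrightarrow> y \<in> gm \<Longrightarrow> br x y \<in> gm" using zg1 by blast
lemma br_g0gp: "x \<in> g0 \<Longrightarrow> y \<in> gp \<Longrightarrow> br x y \<in> gp" using zg2 by blast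
lemma br_gmgm: "x \<in> gm \<Longrightarrow> y \<in> gm \<Longrightarrow> br x y = zG" using zg3 by blast
lemma br_gpgp: "x \<in> gp \<Longrightarrow> y \<in> gp \<Longrightarrow> br x y = zG" using zg4 by blast

lemma br_gmg0: "y \<in> gm \<Longrightarrow> z \<in> g0 \<Longrightarrow> br y z \<in> gm"
proof -
  assume y: "y \<in> gm" and z: "z \<in> g0"
  have "br y z = smG (- ssgn True False) (br z y)"
    using br_anti[of y True z False] y z gm_Od by auto
  then show ?thesis using br_g0gm[OF z y] csubD(4)[OF csub_gm] by simp
qed
lemma br_gpg0: "y \<in> gp \<Longrightarrow> z \<in> g0 \<Longrightarrow> br y z \<in> gp"
proof -
  assume y: "y \<in> gp" and z: "z \<in> g0"
  have "br y z = smG (- ssgn True False) (br z y)"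
    using br_anti[of y True z False] y z gp_Od by auto
  then show ?thesis using br_g0gp[OF z y] csubD(4)[OF csub_gp] by simp
qed
lemma br_OdOd: "x \<in> Od \<Longrightarrow> y \<in> Od \<Longrightarrow> br x y \<in> g0"
  using br_par[of x True y True] by simp

lemma comm_odd_even: "y \<in> Od \<Longrightarrow> z \<in> g0 \<Longrightarrow> u \<in> CM \<Longrightarrow>
   sact M y (sact M z u) = addM (sact M (br y z) u) (sact M z (sact M y u))"
proof -
  assume y: "y \<in> Od" and z: "z \<in> g0" and u: "u \<in> CM"
  have yC: "y \<in> CG" "z \<in> CG" using y z Od_sub g0_sub by auto
  have h: "sact M (br y z) u = addM (sact M y (sact M z u)) (smM (-1) (sact M z (sact M y u)))"
    using sact_br[of y True z False u] y z u by simp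
  have "sact M y (sact M z u) = addM (sact M (br y z) u) (smM (-1) (smM (-1) (sact M z (sact M y u))))"
    by (rule M.eq_sub[OF _ _ _ h]) (use yC u br_in in simp_all)
  also have "smM (-1) (smM (-1) (sact M z (sact M y u))) = sact M z (sact M y u)"
    by (rule M.sm_neg_neg) (use yC u in simp)
  finally show ?thesis .
qed

lemma comm_odd_odd: "y \<in> Od \<Longrightarrow> x \<in> Od \<Longrightarrow> u \<in> CM \<Longrightarrow>
   sact M y (sact M x u) = addM (sact M (br y x) u) (smM (-1) (sact M x (sact M y u)))"
proof -
  assume y: "y \<in> Od" and x: "x \<in> Od" and u: "u \<in> CM"
  have yC: "y \<in> CG" "x \<in> CG" using y x Od_sub by auto
  have h: "sact M (br y x) u = addM (sact M y (sact M x u)) (sact M x (sact M y u))"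
    using sact_br[of y True x True u] y x u yC by simp
  show ?thesis by (rule M.eq_sub[OF _ _ _ h]) (use yC u br_in in simp_all)
qed

lemma anticomm_gm: "y \<in> gm \<Longrightarrow> x \<in> gm \<Longrightarrow> u \<in> CM \<Longrightarrow>
   sact M y (sact M x u) = smM (-1) (sact M x (sact M y u))"
proof -
  assume a: "y \<in> gm" "x \<in> gm" "u \<in> CM"
  then have "y \<in> Od" "x \<in> Od" "y \<in> CG" "x \<in> CG" using gm_Od gm_sub by auto
  then show ?thesis using comm_odd_odd[of y x u] br_gmgm[of y x] a by simp
qed
lemma anticomm_gp: "y \<in> gp \<Longrightarrow> x \<in> gp \<Longrightarrow> u \<in> CM \<Longrightarrow>
   sact M y (sact M x u) = smM (-1) (sact M x (sact M y u))"
proof -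
  assume a: "y \<in> gp" "x \<in> gp" "u \<in> CM"
  then have "y \<in> Od" "x \<in> Od" "y \<in> CG" "x \<in> CG" using gp_Od gp_sub by auto
  then show ?thesis using comm_odd_odd[of y x u] br_gpgp[of y x] a by simp
qed

lemma anticomm_A: assumes "A = gm \<or> A = gp" "y \<in> A" "x \<in> A" "u \<in> CM"
  shows "sact M y (sact M x u) = smM (-1) (sact M x (sact M y u))"
  using assms(1)
proof
  assume h: "A = gm" show ?thesis by (rule anticomm_gm) (use h assms(2-4) in simp_all)
next
  assume h: "A = gp" show ?thesis by (rule anticomm_gp) (use h assms(2-4) in simp_all)
qed

lemma A_sub: assumes "A = gm \<or> A = gp" shows "A \<subseteq> CG"
  using assms(1)
proof
  assume "A = gm" then show ?thesis using gm_sub by blast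
next
  assume "A = gp" then show ?thesis using gp_sub by blast
qed

lemma sq_zero: assumes "A = gm \<or> A = gp" "y \<in> A" "u \<in> CM" shows "sact M y (sact M y u) = zM"
proof -
  define a where "a = sact M y (sact M y u)"
  have yC: "y \<in> CG" using assms A_sub by auto
  have aC: "a \<in> CM" unfolding a_def using yC assms by simp
  have e: "a = smM (-1) a" unfolding a_def using anticomm_A[OF assms(1,2,2,3)] .
  have "addM a a = addM a (smM (-1) a)" by (subst e) (rule refl)
  also have "\<dots> = zM" using aC by simp
  finally have "addM a a = zM" .
  then have "a = zM" using M.double_zero aC by blast
  then show ?thesis unfolding a_def .
qed

lemma act_in[simp]: "set w \<subseteq> CG \<Longrightarrow> v \<in> CM \<Longrightarrow> act w v \<in> CM"
  by (induction w) auto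

lemma act_add: "set w \<subseteq> CG \<Longrightarrow> v \<in> CM \<Longrightarrow> u \<in> CM \<Longrightarrow> act w (addM v u) = addM (act w v) (act w u)"
  by (induction w) (auto simp: sact_add)
lemma act_sm: "set w \<subseteq> CG \<Longrightarrow> v \<in> CM \<Longrightarrow> act w (smM a v) = smM a (act w v)"
  by (induction w) (auto simp: sact_sm)
lemma act_zero[simp]: "set w \<subseteq> CG \<Longrightarrow> act w zM = zM"
  by (induction w) auto

lemma rep_zero_aux: assumes "A = gm \<or> A = gp" "x \<in> A" "set w \<subseteq> A" "x \<in> set w" "u \<in> CM"
  shows "sact M x (act w u) = zM"
  using assms(3,4)
proof (induction w)
  case Nil then show ?case by simp
next
  case (Cons z w)
  have AC: "A \<subseteq> CG" using A_sub[OF assms(1)] .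
  show ?case
  proof (cases "z = x")
    case True then show ?thesis using sq_zero[OF assms(1,2)] Cons AC assms by auto
  next
    case False
    then have "x \<in> set w" using Cons by auto
    then have "sact M x (act w u) = zM" using Cons by auto
    moreover have "sact M x (sact M z (act w u)) = smM (-1) (sact M z (sact M x (act w u)))"
    proof -
      have "z \<in> A" "act w u \<in> CM" using Cons AC assms by auto
      then show ?thesis using anticomm_A[OF assms(1,2)] by blast
    qed
    ultimately show ?thesis using Cons AC by auto
  qed
qed

lemma rep_zero: assumes "A = gm \<or> A = gp" "set w \<subseteq> A" "\<not> distinct w" "u \<in> CM"
  shows "act w u = zM"
  using assms(2,3)
proof (induction w)
  case Nil then show ?case by simp
next
  case (Cons x w)
  have AC: "A \<subseteq> CG" using A_sub[OF assms(1)] .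
  show ?case
  proof (cases "distinct w")
    case True
    then have "x \<in> set w" using Cons by auto
    then show ?thesis using rep_zero_aux[OF assms(1), of x w u] Cons assms by auto
  next
    case False then show ?thesis using Cons AC by auto
  qed
qed

end

lemma lin_span2:
  assumes V: "cv V" and D: "csubspace V D" and S: "S \<subseteq> D"
  and fC: "\<forall>x\<in>D. f x \<in> vcarrier W"
  and fadd: "\<forall>x\<in>D. \<forall>y\<in>D. f (vadd V x y) = vadd W (f x) (f y)"
  and fsm: "\<forall>a. \<forall>x\<in>D. f (vsmult V a x) = vsmult W a (f x)"
  and W: "cv W" and T: "csubspace W T" and ST: "\<forall>s\<in>S. f s \<in> T"
  and x: "x \<in> span V S"
  shows "f x \<in> T"
proof -
  have DC: "D \<subseteq> vcarrier V" using D unfolding csubspace_def by blast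
  have spD: "span V S \<subseteq> D" using cv.span_min[OF V D S] .
  show ?thesis using x
  proof (induction rule: span.induct)
    case span_zero
    have z: "vzero V \<in> D" using D unfolding csubspace_def by blast
    have "f (vzero V) = f (vsmult V 0 (vzero V))" using cv.sm_zero_scalar[OF V] cv.zero_in[OF V] by simp
    also have "\<dots> = vzero W" using fsm fC z cv.sm_zero_scalar[OF W] by simp
    finally show ?case using T by (simp add: csubspace_def)
  next
    case (span_gen x) then show ?case using ST by auto
  next
    case (span_add x y)
    have "x \<in> D" "y \<in> D" using span_add spD by auto
    then show ?case using span_add fadd T by (simp add: csubspace_def)
  next
    case (span_sm x a)
    have "x \<in> D" using span_sm spD by auto
    then show ?case using span_sm fsm T by (simp add: csubspace_def)
  qed
qed

lemma sub_smodD: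
  assumes "sub_smod G Ev Ov M W"
  shows "csubspace M W"
    "\<And>w a b. w \<in> W \<Longrightarrow> a \<in> spar0 M \<Longrightarrow> b \<in> spar1 M \<Longrightarrow> w = vadd M a b \<Longrightarrow> a \<in> W \<and> b \<in> W"
    "\<And>x w. x \<in> ssum G Ev Ov \<Longrightarrow> w \<in> W \<Longrightarrow> sact M x w \<in> W"
  using assms unfolding sub_smod_def by blast+

context LS begin

lemma M_nontriv: "CM \<noteq> {zM}" using simpM unfolding simple_smod_def by (elim conjE) assumption
lemma M_simple: "sub_smod G g0 Od M W \<Longrightarrow> W = {zM} \<or> W = CM"
  using simpM unfolding simple_smod_def by blast

lemma ex_nonzero: "\<exists>m\<in>CM. m \<noteq> zM" using M_nontriv M.zero_in by blast

lemma ssum_g0gp: "ssum G g0 gp \<subseteq> CG"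
proof
  fix x assume "x \<in> ssum G g0 gp"
  then obtain a b where "a \<in> g0" "b \<in> gp" "x = addG a b" unfolding ssum_def by blast
  then show "x \<in> CG" using g0_sub gp_sub G.add_in by blast
qed
lemma g0_in_ssum: "z \<in> g0 \<Longrightarrow> z \<in> ssum G g0 gp"
proof -
  assume z: "z \<in> g0"
  then have "z = addG z zG" using g0_sub by auto
  then show ?thesis unfolding ssum_def using z csubD(2)[OF csub_gp] by blast
qed
lemma gp_in_ssum: "x \<in> gp \<Longrightarrow> x \<in> ssum G g0 gp"
proof -
  assume x: "x \<in> gp"
  then have "x = addG zG x" using gp_sub by auto
  then show ?thesis unfolding ssum_def using x csubD(2)[OF csub_g0] by blast
qed

lemma split_hom:
  assumes Q: "\<forall>w\<in>Q. \<forall>a b. a \<in> P0 \<longrightarrow> b \<in> P1 \<longrightarrow> w = addM a b \<longrightarrow> a \<in> Q \<and> b \<in> Q"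
  and x: "x \<in> hpart P0 P1 p" and y: "y \<in> hpart P0 P1 (\<not> p)" and s: "addM x y \<in> Q"
  shows "x \<in> Q \<and> y \<in> Q"
proof (cases p)
  case False
  then have "x \<in> P0" "y \<in> P1" using x y by auto
  then show ?thesis using Q s by blast
next
  case True
  then have xy: "x \<in> P1" "y \<in> P0" using x y by auto
  then have "addM x y = addM y x" using P0_sub P1_sub M.comm by blast
  then have "addM y x \<in> Q" using s by simp
  then show ?thesis using Q xy by blast
qed

lemma act_par: "set w \<subseteq> g0 \<union> Od \<Longrightarrow> \<exists>r. \<forall>p a. a \<in> hpart P0 P1 p \<longrightarrow> act w a \<in> hpart P0 P1 (p \<noteq> r)"
proof (induction w)
  case Nil then show ?case by (intro exI[of _ False]) simp
next
  case (Cons x w)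
  then obtain r where r: "\<forall>p a. a \<in> hpart P0 P1 p \<longrightarrow> act w a \<in> hpart P0 P1 (p \<noteq> r)" by auto
  have "\<exists>q. x \<in> hpart g0 Od q"
  proof (cases "x \<in> g0")
    case True then have "x \<in> hpart g0 Od False" by simp then show ?thesis by blast
  next
    case False then have "x \<in> hpart g0 Od True" using Cons.prems by simp then show ?thesis by blast
  qed
  then obtain q where xh: "x \<in> hpart g0 Od q" by blast
  have "\<forall>p a. a \<in> hpart P0 P1 p \<longrightarrow> act (x#w) a \<in> hpart P0 P1 (p \<noteq> (q \<noteq> r))"
  proof (intro allI impI)
    fix p a assume "a \<in> hpart P0 P1 p"
    then have "act w a \<in> hpart P0 P1 (p \<noteq> r)" using r by blast
    then have "sact M x (act w a) \<in> hpart P0 P1 (q \<noteq> (p \<noteq> r))" by (rule sact_par[OF xh])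
    moreover have "(q \<noteq> (p \<noteq> r)) = (p \<noteq> (q \<noteq> r))" by blast
    ultimately show "act (x#w) a \<in> hpart P0 P1 (p \<noteq> (q \<noteq> r))" by simp
  qed
  then show ?case by blast
qed

lemma act_graded:
  assumes Q: "\<forall>w\<in>Q. \<forall>a b. a \<in> P0 \<longrightarrow> b \<in> P1 \<longrightarrow> w = addM a b \<longrightarrow> a \<in> Q \<and> b \<in> Q"
  and w: "set w \<subseteq> g0 \<union> Od" and a: "a \<in> P0" and b: "b \<in> P1"
  and s: "act w (addM a b) \<in> Q"
  shows "act w a \<in> Q \<and> act w b \<in> Q"
proof -
  obtain r where r: "\<forall>p a. a \<in> hpart P0 P1 p \<longrightarrow> act w a \<in> hpart P0 P1 (p \<noteq> r)"
    using act_par[OF w] by blast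
  have wC: "set w \<subseteq> CG" using w g0_sub Od_sub by blast
  have "act w a \<in> hpart P0 P1 (False \<noteq> r)" using r a hpart_simps(1)[of P0 P1] by blast
  moreover have "act w b \<in> hpart P0 P1 (True \<noteq> r)" using r b hpart_simps(2)[of P0 P1] by blast
  moreover have "addM (act w a) (act w b) \<in> Q" using s act_add[OF wC, of a b] a b P0_sub P1_sub by (simp add: subset_iff)
  ultimately show ?thesis using split_hom[OF Q, of "act w a" r "act w b"] by simp
qed

definition "pr x = (SOME p. fst p \<in> gm \<and> snd p \<in> gp \<and> x = addG (fst p) (snd p))"

lemma pr_prop: "x \<in> Od \<Longrightarrow> fst (pr x) \<in> gm \<and> snd (pr x) \<in> gp \<and> x = addG (fst (pr x)) (snd (pr x))"
proof -
  assume x: "x \<in> Od"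
  then obtain a b where "a \<in> gm" "b \<in> gp" "x = addG a b" using decompOd by blast
  then have "\<exists>p. fst p \<in> gm \<and> snd p \<in> gp \<and> x = addG (fst p) (snd p)" by (intro exI[of _ "(a,b)"]) simp
  then show ?thesis unfolding pr_def by (rule someI_ex)
qed

lemma pr_obt: assumes "x \<in> Od" obtains xm xp where "pr x = (xm, xp)" "xm \<in> gm" "xp \<in> gp" "x = addG xm xp"
  using pr_prop[OF assms] by (metis prod.collapse)

lemma pr_unique: "a \<in> gm \<Longrightarrow> b \<in> gp \<Longrightarrow> pr (addG a b) = (a, b)"
proof -
  assume a: "a \<in> gm" and b: "b \<in> gp"
  have x: "addG a b \<in> Od" unfolding ssum_def using a b by blast
  obtain xm xp where h: "pr (addG a b) = (xm, xp)" "xm \<in> gm" "xp \<in> gp" "addG a b = addG xm xp"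
    using pr_obt[OF x] by blast
  have "a = xm \<and> b = xp" by (rule dsum_unique[OF dsOd a h(2) b h(3) h(4)]) (use x in simp)
  then show ?thesis using h(1) by simp
qed

lemma pr_gm: "y \<in> gm \<Longrightarrow> fst (pr y) = y"
proof -
  assume y: "y \<in> gm"
  then have "y = addG y zG" using gm_sub by auto
  then have "pr y = (y, zG)" using pr_unique[OF y csubD(2)[OF csub_gp]] by simp
  then show ?thesis by simp
qed
lemma pr_gp: "y \<in> gp \<Longrightarrow> snd (pr y) = y"
proof -
  assume y: "y \<in> gp"
  then have "y = addG zG y" using gp_sub by auto
  then have "pr y = (zG, y)" using pr_unique[OF csubD(2)[OF csub_gm] y] by simp
  then show ?thesis by simp
qed

lemma pr_add: "x \<in> Od \<Longrightarrow> y \<in> Od \<Longrightarrow> pr (addG x y) = (addG (fst (pr x)) (fst (pr y)), addG (snd (pr x)) (snd (pr y)))"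
proof -
  assume x: "x \<in> Od" and y: "y \<in> Od"
  obtain xm xp where hx: "pr x = (xm, xp)" "xm \<in> gm" "xp \<in> gp" "x = addG xm xp" using pr_obt[OF x] by blast
  obtain ym yp where hy: "pr y = (ym, yp)" "ym \<in> gm" "yp \<in> gp" "y = addG ym yp" using pr_obt[OF y] by blast
  have C: "xm \<in> CG" "xp \<in> CG" "ym \<in> CG" "yp \<in> CG" using hx hy gm_sub gp_sub by auto
  have "addG x y = addG (addG xm ym) (addG xp yp)" unfolding hx(4) hy(4) by (rule G.swap4[OF C(1,2,3,4)])
  moreover have "addG xm ym \<in> gm" using hx hy csubD(3)[OF csub_gm] by blast
  moreover have "addG xp yp \<in> gp" using hx hy csubD(3)[OF csub_gp] by blast
  ultimately have "pr (addG x y) = (addG xm ym, addG xp yp)" using pr_unique by simp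
  then show ?thesis using hx hy by simp
qed

lemma pr_sm: "x \<in> Od \<Longrightarrow> pr (smG c x) = (smG c (fst (pr x)), smG c (snd (pr x)))"
proof -
  assume x: "x \<in> Od"
  obtain xm xp where hx: "pr x = (xm, xp)" "xm \<in> gm" "xp \<in> gp" "x = addG xm xp" using pr_obt[OF x] by blast
  have C: "xm \<in> CG" "xp \<in> CG" using hx gm_sub gp_sub by auto
  have "smG c x = addG (smG c xm) (smG c xp)" unfolding hx(4) by (rule G.sm_add[OF C])
  moreover have "smG c xm \<in> gm" using hx csubD(4)[OF csub_gm] by blast
  moreover have "smG c xp \<in> gp" using hx csubD(4)[OF csub_gp] by blast
  ultimately have "pr (smG c x) = (smG c xm, smG c xp)" using pr_unique by simp
  then show ?thesis using hx by simp
qed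

definition "bs = (SOME bs. set bs \<subseteq> Od \<and> (\<forall>x\<in>Od. \<exists>cs. length cs = length bs \<and> x = lincomb G (zip cs bs)))"

lemma bs_prop: "set bs \<subseteq> Od \<and> (\<forall>x\<in>Od. \<exists>cs. length cs = length bs \<and> x = lincomb G (zip cs bs))"
  using fd unfolding fin_dim_def bs_def by (rule someI_ex)

lemma Od_span: "Od \<subseteq> span G (set bs)"
proof
  fix x assume x: "x \<in> Od"
  then obtain cs where "x = lincomb G (zip cs bs)" using bs_prop by blast
  moreover have "set bs \<subseteq> CG" using bs_prop Od_sub by blast
  ultimately show "x \<in> span G (set bs)" using G.lincomb_span by blast
qed

definition "Bm = (\<lambda>x. fst (pr x)) ` set bs"
definition "Bp = (\<lambda>x. snd (pr x)) ` set bs"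

lemma Bm_fin: "finite Bm" unfolding Bm_def by simp
lemma Bp_fin: "finite Bp" unfolding Bp_def by simp
lemma Bm_sub: "Bm \<subseteq> gm" unfolding Bm_def using bs_prop pr_prop by blast
lemma Bp_sub: "Bp \<subseteq> gp" unfolding Bp_def using bs_prop pr_prop by blast

lemma gm_span: "y \<in> gm \<Longrightarrow> y \<in> span G Bm"
proof -
  assume y: "y \<in> gm"
  have "fst (pr y) \<in> span G Bm"
  proof (rule lin_span2[OF cvG csub_Od, of "set bs" "\<lambda>x. fst (pr x)" G])
    show "set bs \<subseteq> Od" using bs_prop by blast
    show "\<forall>x\<in>Od. fst (pr x) \<in> CG" using pr_prop gm_sub by blast
    show "\<forall>x\<in>Od. \<forall>y\<in>Od. fst (pr (addG x y)) = addG (fst (pr x)) (fst (pr y))" using pr_add by simp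
    show "\<forall>a. \<forall>x\<in>Od. fst (pr (smG a x)) = smG a (fst (pr x))" using pr_sm by simp
    show "cv G" by (rule cvG)
    show "csubspace G (span G Bm)" using G.csub_span Bm_sub gm_sub by blast
    show "\<forall>s\<in>set bs. fst (pr s) \<in> span G Bm" unfolding Bm_def by (auto intro: span.span_gen)
    show "y \<in> span G (set bs)" using Od_span y gm_Od by blast
  qed
  then show ?thesis using pr_gm[OF y] by simp
qed

lemma gp_span: "y \<in> gp \<Longrightarrow> y \<in> span G Bp"
proof -
  assume y: "y \<in> gp"
  have "snd (pr y) \<in> span G Bp"
  proof (rule lin_span2[OF cvG csub_Od, of "set bs" "\<lambda>x. snd (pr x)" G])
    show "set bs \<subseteq> Od" using bs_prop by blast
    show "\<forall>x\<in>Od. snd (pr x) \<in> CG" using pr_prop gp_sub by blast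
    show "\<forall>x\<in>Od. \<forall>y\<in>Od. snd (pr (addG x y)) = addG (snd (pr x)) (snd (pr y))" using pr_add by simp
    show "\<forall>a. \<forall>x\<in>Od. snd (pr (smG a x)) = smG a (snd (pr x))" using pr_sm by simp
    show "cv G" by (rule cvG)
    show "csubspace G (span G Bp)" using G.csub_span Bp_sub gp_sub by blast
    show "\<forall>s\<in>set bs. snd (pr s) \<in> span G Bp" unfolding Bp_def by (auto intro: span.span_gen)
    show "y \<in> span G (set bs)" using Od_span y gp_Od by blast
  qed
  then show ?thesis using pr_gp[OF y] by simp
qed

lemma sact_span_sub:
  assumes B: "B \<subseteq> CG" and y: "y \<in> span G B" and v: "v \<in> CM" and T: "csubspace M T"
    and BT: "\<forall>b\<in>B. sact M b v \<in> T"
  shows "sact M y v \<in> T"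
proof (rule lin_span[OF cvG cvM B, of "\<lambda>x. sact M x v"])
  show "\<forall>x\<in>CG. sact M x v \<in> CM" using v by simp
  show "\<forall>x\<in>CG. \<forall>y\<in>CG. sact M (addG x y) v = addM (sact M x v) (sact M y v)" using sact_addx v by blast
  show "\<forall>a. \<forall>x\<in>CG. sact M (smG a x) v = smM a (sact M x v)" using sact_smx v by blast
qed (use T BT y in auto)

lemma sact_lin_span:
  assumes S: "S \<subseteq> CM" and u: "u \<in> span M S" and x: "x \<in> CG" and T: "csubspace M T"
    and ST: "\<forall>s\<in>S. sact M x s \<in> T"
  shows "sact M x u \<in> T"
proof (rule lin_span[OF cvM cvM S, of "sact M x"])
  show "\<forall>v\<in>CM. sact M x v \<in> CM" using x by simp
  show "\<forall>v\<in>CM. \<forall>w\<in>CM. sact M x (addM v w) = addM (sact M x v) (sact M x w)" using sact_add x by blast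
  show "\<forall>a. \<forall>v\<in>CM. sact M x (smM a v) = smM a (sact M x v)" using sact_sm x by blast
qed (use T ST u in auto)

end

context LS begin

lemma Bm_C: "Bm \<subseteq> CG" using Bm_sub gm_sub by blast
lemma Bp_C: "Bp \<subseteq> CG" using Bp_sub gp_sub by blast

definition "Sg m = (\<lambda>w. act w m) ` {w. set w \<subseteq> Bm \<and> distinct w}"

lemma Sg_fin: "finite (Sg m)"
  unfolding Sg_def using finite_subset_distinct[OF Bm_fin] by blast

lemma Sg_sub: "m \<in> CM \<Longrightarrow> Sg m \<subseteq> CM"
  unfolding Sg_def using Bm_C act_in by blast

lemma m_in_Sg: "m \<in> Sg m"
proof -
  have "act [] m \<in> Sg m" unfolding Sg_def by (rule imageI) simp
  then show ?thesis by simp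
qed

lemma gm_word_span: "m \<in> CM \<Longrightarrow> set w \<subseteq> gm \<Longrightarrow> act w m \<in> span M (Sg m)"
proof (induction w)
  case Nil then show ?case using m_in_Sg by (simp add: span.span_gen)
next
  case (Cons y w)
  have y: "y \<in> gm" using Cons.prems by simp
  have T: "csubspace M (span M (Sg m))" using M.csub_span Sg_sub[OF Cons.prems(1)] .
  have IH: "act w m \<in> span M (Sg m)" using Cons by simp
  have "sact M y (act w m) \<in> span M (Sg m)"
  proof (rule sact_lin_span[OF Sg_sub[OF Cons.prems(1)] IH _ T])
    show "y \<in> CG" using y gm_sub by blast
    show "\<forall>s\<in>Sg m. sact M y s \<in> span M (Sg m)"
    proof
      fix s assume "s \<in> Sg m"
      then obtain w' where w': "set w' \<subseteq> Bm" "distinct w'" "s = act w' m" unfolding Sg_def by blast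
      have sC: "s \<in> CM" using w' Bm_C Cons.prems by simp
      show "sact M y s \<in> span M (Sg m)"
      proof (rule sact_span_sub[OF Bm_C gm_span[OF y] sC T])
        show "\<forall>b\<in>Bm. sact M b s \<in> span M (Sg m)"
        proof
          fix b assume b: "b \<in> Bm"
          have eq: "sact M b s = act (b#w') m" using w' by simp
          show "sact M b s \<in> span M (Sg m)"
          proof (cases "b \<in> set w'")
            case True
            have "act (b#w') m = zM"
              by (rule rep_zero[of gm]) (use True b w' Bm_sub Cons.prems in auto)
            then show ?thesis using eq span.span_zero by metis
          next
            case False
            have "act (b#w') m \<in> Sg m" unfolding Sg_def
              by (rule image_eqI[of _ _ "b#w'"]) (use b w' False in auto)
            then show ?thesis using eq span.span_gen by metis
          qed
        qed
      qed
    qed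
  qed
  then show ?case by simp
qed

definition "Gen v = {act w v | w. set w \<subseteq> gm} \<union> {sact M z (act w v) | z w. z \<in> g0 \<and> set w \<subseteq> gm}
   \<union> {sact M x (act w v) | x w. x \<in> gp \<and> set w \<subseteq> gm}"

lemma Gen_sub: "v \<in> CM \<Longrightarrow> Gen v \<subseteq> CM"
proof
  fix s assume v: "v \<in> CM" and s: "s \<in> Gen v"
  have gmC: "\<And>w. set w \<subseteq> gm \<Longrightarrow> set w \<subseteq> CG" using gm_sub by blast
  show "s \<in> CM" using s unfolding Gen_def
  proof (elim UnE CollectE exE conjE)
    fix w assume "s = act w v" "set w \<subseteq> gm" then show "s \<in> CM" using gmC v by simp
  next
    fix z w assume "s = sact M z (act w v)" "z \<in> g0" "set w \<subseteq> gm"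
    then show "s \<in> CM" using gmC v g0_sub by auto
  next
    fix z w assume "s = sact M z (act w v)" "z \<in> gp" "set w \<subseteq> gm"
    then show "s \<in> CM" using gmC v gp_sub by auto
  qed
qed

lemma Gen_I1: "set w \<subseteq> gm \<Longrightarrow> act w v \<in> span M (Gen v)"
  unfolding Gen_def by (rule span.span_gen) blast
lemma Gen_I2: "z \<in> g0 \<Longrightarrow> set w \<subseteq> gm \<Longrightarrow> sact M z (act w v) \<in> span M (Gen v)"
  unfolding Gen_def by (rule span.span_gen) blast
lemma Gen_I3: "x \<in> gp \<Longrightarrow> set w \<subseteq> gm \<Longrightarrow> sact M x (act w v) \<in> span M (Gen v)"
  unfolding Gen_def by (rule span.span_gen) blast

lemma Gen_stable: assumes v: "v \<in> CM" and y: "y \<in> gm" and s: "s \<in> Gen v"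
  shows "sact M y s \<in> span M (Gen v)"
proof -
  have gmC: "\<And>w. set w \<subseteq> gm \<Longrightarrow> set w \<subseteq> CG" using gm_sub by blast
  have yO: "y \<in> Od" "y \<in> CG" using y gm_Od gm_sub by auto
  have T: "csubspace M (span M (Gen v))" using M.csub_span Gen_sub[OF v] .
  show ?thesis using s[unfolded Gen_def]
  proof (elim UnE CollectE exE conjE)
    fix w assume "s = act w v" "set w \<subseteq> gm"
    then show ?thesis using Gen_I1[of "y#w" v] y by simp
  next
    fix z w assume s: "s = sact M z (act w v)" and z: "z \<in> g0" and w: "set w \<subseteq> gm"
    have u: "act w v \<in> CM" using gmC[OF w] v by simp
    have e: "sact M y s = addM (sact M (br y z) (act w v)) (sact M z (sact M y (act w v)))"
      unfolding s by (rule comm_odd_even[OF yO(1) z u])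
    have "sact M (br y z) (act w v) \<in> span M (Gen v)"
      using Gen_I1[of "br y z # w" v] br_gmg0[OF y z] w by simp
    moreover have "sact M z (sact M y (act w v)) \<in> span M (Gen v)"
      using Gen_I2[of z "y#w" v] z y w by simp
    ultimately show ?thesis unfolding e by (rule csubD(3)[OF T])
  next
    fix x w assume s: "s = sact M x (act w v)" and x: "x \<in> gp" and w: "set w \<subseteq> gm"
    have u: "act w v \<in> CM" using gmC[OF w] v by simp
    have e: "sact M y s = addM (sact M (br y x) (act w v)) (smM (-1) (sact M x (sact M y (act w v))))"
      unfolding s by (rule comm_odd_odd[OF yO(1) _ u]) (use x gp_Od in blast)
    have "br y x \<in> g0" using br_OdOd yO x gp_Od by blast
    then have "sact M (br y x) (act w v) \<in> span M (Gen v)"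
      using Gen_I2[of "br y x" w v] w by simp
    moreover have "sact M x (sact M y (act w v)) \<in> span M (Gen v)"
      using Gen_I3[of x "y#w" v] x y w by simp
    ultimately show ?thesis unfolding e by (intro csubD(3)[OF T] csubD(4)[OF T])
  qed
qed

lemma Gen_span_stable: "v \<in> CM \<Longrightarrow> y \<in> gm \<Longrightarrow> u \<in> span M (Gen v) \<Longrightarrow> sact M y u \<in> span M (Gen v)"
  using sact_lin_span[OF Gen_sub _ _ M.csub_span[OF Gen_sub], of v u y v] Gen_stable gm_sub by blast

lemma act_Gen: assumes v: "v \<in> CM" and s: "s \<in> g0 \<or> s \<in> gp"
  shows "set w \<subseteq> gm \<Longrightarrow> act w (sact M s v) \<in> span M (Gen v)"
proof (induction w)
  case Nil
  show ?case using s Gen_I2[of s "[]" v] Gen_I3[of s "[]" v] by auto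
next
  case (Cons y w)
  then show ?case using Gen_span_stable[OF v, of y "act w (sact M s v)"] by simp
qed

lemma fin_gen:
  assumes m: "m \<in> CM" "m \<noteq> zM" and Q: "sub_smod G g0 gp M Q" and SQ: "Sg m \<subseteq> Q"
  shows "Q = CM"
proof -
  note Qs = sub_smodD[OF Q]
  have QC: "Q \<subseteq> CM" using csubD(1)[OF Qs(1)] .
  have Qg0: "\<And>z u. z \<in> g0 \<Longrightarrow> u \<in> Q \<Longrightarrow> sact M z u \<in> Q" using Qs(3) g0_in_ssum by blast
  have Qgp: "\<And>z u. z \<in> gp \<Longrightarrow> u \<in> Q \<Longrightarrow> sact M z u \<in> Q" using Qs(3) gp_in_ssum by blast
  have gmC: "\<And>w. set w \<subseteq> gm \<Longrightarrow> set w \<subseteq> CG" using gm_sub by blast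
  define Q2 where "Q2 = {v\<in>CM. \<forall>w. set w \<subseteq> gm \<longrightarrow> act w v \<in> Q}"
  have add2: "addM u v \<in> Q2" if "u \<in> Q2" "v \<in> Q2" for u v
  proof -
    have "act w (addM u v) \<in> Q" if w: "set w \<subseteq> gm" for w
    proof -
      have "act w (addM u v) = addM (act w u) (act w v)"
        using act_add[OF gmC[OF w]] \<open>u \<in> Q2\<close> \<open>v \<in> Q2\<close> unfolding Q2_def by blast
      then show ?thesis using csubD(3)[OF Qs(1)] \<open>u \<in> Q2\<close> \<open>v \<in> Q2\<close> w unfolding Q2_def by auto
    qed
    then show ?thesis using that unfolding Q2_def by auto
  qed
  have GenQ: "span M (Gen v) \<subseteq> Q" if "v \<in> Q2" for v
  proof (rule M.span_min[OF Qs(1)])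
    show "Gen v \<subseteq> Q"
    proof
      fix s assume s: "s \<in> Gen v"
      show "s \<in> Q" using s unfolding Gen_def
      proof (elim UnE CollectE exE conjE)
        fix w assume "s = act w v" "set w \<subseteq> gm" then show ?thesis using that unfolding Q2_def by blast
      next
        fix z w assume "s = sact M z (act w v)" "z \<in> g0" "set w \<subseteq> gm"
        then show ?thesis using that Qg0 unfolding Q2_def by blast
      next
        fix z w assume "s = sact M z (act w v)" "z \<in> gp" "set w \<subseteq> gm"
        then show ?thesis using that Qgp unfolding Q2_def by blast
      qed
    qed
  qed
  have even_stable: "sact M s v \<in> Q2" if "v \<in> Q2" "s \<in> g0 \<or> s \<in> gp" for s v
  proof -
    have vC: "v \<in> CM" using that unfolding Q2_def by blast
    have sC: "s \<in> CG" using that g0_sub gp_sub by blast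
    have "act w (sact M s v) \<in> Q" if "set w \<subseteq> gm" for w
      using act_Gen[OF vC \<open>s \<in> g0 \<or> s \<in> gp\<close> that] GenQ[OF \<open>v \<in> Q2\<close>] by blast
    then show ?thesis unfolding Q2_def using vC sC by simp
  qed
  have gm_stable: "sact M s v \<in> Q2" if "v \<in> Q2" "s \<in> gm" for s v
  proof -
    have vC: "v \<in> CM" using that unfolding Q2_def by blast
    have sC: "s \<in> CG" using that gm_sub by blast
    have "act w (sact M s v) \<in> Q" if "set w \<subseteq> gm" for w
    proof -
      have "set (w@[s]) \<subseteq> gm" using that \<open>s \<in> gm\<close> by simp
      then have "act (w @ [s]) v \<in> Q" using \<open>v \<in> Q2\<close> unfolding Q2_def by blast
      then show ?thesis by simp
    qed
    then show ?thesis unfolding Q2_def using vC sC by simp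
  qed
  have cs2: "csubspace M Q2" unfolding csubspace_def
  proof (intro conjI ballI allI)
    show "Q2 \<subseteq> CM" unfolding Q2_def by blast
    show "zM \<in> Q2" unfolding Q2_def using gmC csubD(2)[OF Qs(1)] by simp
    show "addM x y \<in> Q2" if "x \<in> Q2" "y \<in> Q2" for x y using add2 that by blast
    show "smM a x \<in> Q2" if "x \<in> Q2" for a x
    proof -
      have "act w (smM a x) \<in> Q" if w: "set w \<subseteq> gm" for w
        using act_sm[OF gmC[OF w]] csubD(4)[OF Qs(1)] \<open>x \<in> Q2\<close> w unfolding Q2_def by auto
      then show ?thesis using that unfolding Q2_def by auto
    qed
  qed
  have gr2: "a \<in> Q2 \<and> b \<in> Q2" if u: "u \<in> Q2" and a: "a \<in> P0" and b: "b \<in> P1" and e: "u = addM a b" for u a b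
  proof -
    have gr: "\<forall>w\<in>Q. \<forall>a b. a \<in> P0 \<longrightarrow> b \<in> P1 \<longrightarrow> w = addM a b \<longrightarrow> a \<in> Q \<and> b \<in> Q"
      using Qs(2) by blast
    have "act w a \<in> Q \<and> act w b \<in> Q" if w: "set w \<subseteq> gm" for w
    proof (rule act_graded[OF gr _ a b])
      show "set w \<subseteq> g0 \<union> Od" using w gm_Od by blast
      show "act w (addM a b) \<in> Q" using u w e unfolding Q2_def by blast
    qed
    then show "a \<in> Q2 \<and> b \<in> Q2" unfolding Q2_def using a b P0_sub P1_sub by blast
  qed
  have st2: "sact M x u \<in> Q2" if x: "x \<in> ssum G g0 Od" and u: "u \<in> Q2" for x u
  proof -
    obtain a b where ab: "a \<in> g0" "b \<in> Od" "x = addG a b" using x unfolding ssum_def by blast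
    obtain c d where cd: "c \<in> gm" "d \<in> gp" "b = addG c d" using decompOd[OF ab(2)] by blast
    have uC: "u \<in> CM" using u unfolding Q2_def by blast
    have C: "a \<in> CG" "b \<in> CG" "c \<in> CG" "d \<in> CG" using ab cd g0_sub Od_sub gm_sub gp_sub by auto
    have e: "sact M x u = addM (sact M a u) (addM (sact M c u) (sact M d u))"
      unfolding ab(3) cd(3) using sact_addx C uC G.add_in by simp
    have "sact M a u \<in> Q2" using even_stable u ab by blast
    moreover have "sact M c u \<in> Q2" using gm_stable u cd by blast
    moreover have "sact M d u \<in> Q2" using even_stable u cd by blast
    ultimately show "sact M x u \<in> Q2" unfolding e using add2 by blast
  qed
  have sub2: "sub_smod G g0 Od M Q2"
    unfolding sub_smod_def using cs2 gr2 st2 by blast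
  have mQ2: "m \<in> Q2"
  proof -
    have "span M (Sg m) \<subseteq> Q" using M.span_min[OF Qs(1) SQ] .
    then show ?thesis unfolding Q2_def using gm_word_span m by blast
  qed
  have "Q2 \<noteq> {zM}" using mQ2 m by blast
  then have "Q2 = CM" using M_simple[OF sub2] by blast
  have "CM \<subseteq> Q"
  proof
    fix v assume "v \<in> CM"
    then have "v \<in> Q2" using \<open>Q2 = CM\<close> by simp
    then have "\<forall>w. set w \<subseteq> gm \<longrightarrow> act w v \<in> Q" unfolding Q2_def by blast
    then have "act [] v \<in> Q" by (metis empty_set empty_subsetI)
    then show "v \<in> Q" by simp
  qed
  then show ?thesis using QC by blast
qed

end

lemma chain_finite_sub:
  assumes fin: "finite S" and ch: "chain\<^sub>\<subseteq> C" and ne: "C \<noteq> {}"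
  shows "S \<subseteq> \<Union>C \<Longrightarrow> \<exists>X\<in>C. S \<subseteq> X"
  using fin
proof (induction S rule: finite_induct)
  case empty then show ?case using ne by blast
next
  case (insert s S)
  then obtain X where X: "X \<in> C" "S \<subseteq> X" by blast
  obtain Y where Y: "Y \<in> C" "s \<in> Y" using insert.prems by blast
  have "X \<subseteq> Y \<or> Y \<subseteq> X" using ch X Y unfolding chain_subset_def by blast
  then show ?case using X Y by blast
qed

context LS begin

definition "m0 = (SOME m. m \<in> CM \<and> m \<noteq> zM)"
lemma m0: "m0 \<in> CM" "m0 \<noteq> zM"
  using someI_ex[OF ex_nonzero[unfolded Bex_def]] unfolding m0_def by blast+

abbreviation "S0 \<equiv> Sg m0"
lemma S0C: "S0 \<subseteq> CM" using Sg_sub[OF m0(1)] .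

definition "Fam = {K. sub_smod G g0 gp M K \<and> \<not> S0 \<subseteq> K}"

lemma sub_zero: "sub_smod G g0 gp M {zM}"
proof -
  have c: "csubspace M {zM}" unfolding csubspace_def by simp
  have g: "a \<in> {zM} \<and> b \<in> {zM}" if w: "w \<in> {zM}" and a: "a \<in> P0" and b: "b \<in> P1" and e: "w = addM a b" for w a b
  proof -
    have z0: "zM \<in> P0" "zM \<in> P1" using csubD(2)[OF csub_P0] csubD(2)[OF csub_P1] by auto
    have "addM a b = addM zM zM" using w e by simp
    then have "a = zM \<and> b = zM" using dsum_unique[OF dsM a z0(1) b z0(2)] by simp
    then show "a \<in> {zM} \<and> b \<in> {zM}" by simp
  qed
  have s: "sact M x w \<in> {zM}" if "x \<in> ssum G g0 gp" "w \<in> {zM}" for x w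
    using that ssum_g0gp by auto
  show ?thesis unfolding sub_smod_def using c g s by blast
qed

lemma union_sub:
  assumes C: "C \<subseteq> Fam" "chain\<^sub>\<subseteq> C" "C \<noteq> {}"
  shows "sub_smod G g0 gp M (\<Union>C)"
proof -
  have subs: "\<And>X. X \<in> C \<Longrightarrow> sub_smod G g0 gp M X" using C(1) unfolding Fam_def by blast
  have csX: "\<And>X. X \<in> C \<Longrightarrow> csubspace M X" by (rule sub_smodD(1)[OF subs])
  have cs: "csubspace M (\<Union>C)" unfolding csubspace_def
  proof (intro conjI ballI allI)
    show "\<Union>C \<subseteq> CM"
    proof
      fix x assume "x \<in> \<Union>C"
      then obtain X where X: "X \<in> C" "x \<in> X" by blast
      then show "x \<in> CM" using csubD(1)[OF csX[OF X(1)]] by blast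
    qed
    obtain X where X: "X \<in> C" using C(3) by blast
    then have "zM \<in> X" using csubD(2)[OF csX[OF X]] by blast
    then show "zM \<in> \<Union>C" using X by blast
  next
    fix x y assume x: "x \<in> \<Union>C" and y: "y \<in> \<Union>C"
    then obtain X Y where X: "X \<in> C" "x \<in> X" and Y: "Y \<in> C" "y \<in> Y" by blast
    have "X \<subseteq> Y \<or> Y \<subseteq> X" using C(2) X Y unfolding chain_subset_def by blast
    then have "\<exists>Z\<in>C. x \<in> Z \<and> y \<in> Z" using X Y by blast
    then obtain Z where Z: "Z \<in> C" "x \<in> Z" "y \<in> Z" by blast
    then have "addM x y \<in> Z" using csubD(3)[OF csX[OF Z(1)]] by blast
    then show "addM x y \<in> \<Union>C" using Z by blast
  next
    fix a x assume x: "x \<in> \<Union>C"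
    then obtain X where X: "X \<in> C" "x \<in> X" by blast
    then have "smM a x \<in> X" using csubD(4)[OF csX[OF X(1)]] by blast
    then show "smM a x \<in> \<Union>C" using X by blast
  qed
  have g: "a \<in> \<Union>C \<and> b \<in> \<Union>C" if w: "w \<in> \<Union>C" and a: "a \<in> P0" and b: "b \<in> P1" and e: "w = addM a b" for w a b
  proof -
    obtain X where X: "X \<in> C" "w \<in> X" using w by blast
    then have "a \<in> X \<and> b \<in> X" using sub_smodD(2)[OF subs[OF X(1)]] a b e by blast
    then show "a \<in> \<Union>C \<and> b \<in> \<Union>C" using X by blast
  qed
  have s: "sact M x w \<in> \<Union>C" if x: "x \<in> ssum G g0 gp" and w: "w \<in> \<Union>C" for x w
  proof -
    obtain X where X: "X \<in> C" "w \<in> X" using w by blast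
    then have "sact M x w \<in> X" using sub_smodD(3)[OF subs[OF X(1)]] x by blast
    then show "sact M x w \<in> \<Union>C" using X by blast
  qed
  show ?thesis unfolding sub_smod_def using cs g s by blast
qed

lemma Fam_zorn: "\<exists>K\<in>Fam. \<forall>X\<in>Fam. K \<subseteq> X \<longrightarrow> X = K"
proof (rule Zorn_Lemma2, intro ballI)
  fix C assume C: "C \<in> chains Fam"
  then have C1: "C \<subseteq> Fam" "chain\<^sub>\<subseteq> C" unfolding chains_def by auto
  show "\<exists>U\<in>Fam. \<forall>X\<in>C. X \<subseteq> U"
  proof (cases "C = {}")
    case True
    have "{zM} \<in> Fam" unfolding Fam_def using sub_zero m_in_Sg[of m0] m0 by blast
    then show ?thesis using True by blast
  next
    case False
    have "\<not> S0 \<subseteq> \<Union>C"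
    proof
      assume "S0 \<subseteq> \<Union>C"
      then obtain X where "X \<in> C" "S0 \<subseteq> X" using chain_finite_sub[OF Sg_fin C1(2) False] by blast
      then show False using C1(1) unfolding Fam_def by blast
    qed
    then have "\<Union>C \<in> Fam" unfolding Fam_def using union_sub[OF C1 False] by blast
    then show ?thesis by blast
  qed
qed

definition "K = (SOME K. K \<in> Fam \<and> (\<forall>X\<in>Fam. K \<subseteq> X \<longrightarrow> X = K))"

lemma K_prop: "K \<in> Fam" "\<forall>X\<in>Fam. K \<subseteq> X \<longrightarrow> X = K"
  using someI_ex[OF Fam_zorn[unfolded Bex_def]] unfolding K_def by blast+

lemma K_sub: "sub_smod G g0 gp M K" using K_prop(1) unfolding Fam_def by blast
lemma K_notS: "\<not> S0 \<subseteq> K" using K_prop(1) unfolding Fam_def by blast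
lemma K_cs: "csubspace M K" using sub_smodD(1)[OF K_sub] .
lemma K_C: "K \<subseteq> CM" using csubD(1)[OF K_cs] .
lemma K_zero: "zM \<in> K" using csubD(2)[OF K_cs] .
lemma K_add: "x \<in> K \<Longrightarrow> y \<in> K \<Longrightarrow> addM x y \<in> K" using csubD(3)[OF K_cs] .
lemma K_sm: "x \<in> K \<Longrightarrow> smM a x \<in> K" using csubD(4)[OF K_cs] .
lemma K_gr: "w \<in> K \<Longrightarrow> a \<in> P0 \<Longrightarrow> b \<in> P1 \<Longrightarrow> w = addM a b \<Longrightarrow> a \<in> K \<and> b \<in> K"
  using sub_smodD(2)[OF K_sub] by blast
lemma K_g0: "z \<in> g0 \<Longrightarrow> u \<in> K \<Longrightarrow> sact M z u \<in> K" using sub_smodD(3)[OF K_sub] g0_in_ssum by blast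
lemma K_gp: "z \<in> gp \<Longrightarrow> u \<in> K \<Longrightarrow> sact M z u \<in> K" using sub_smodD(3)[OF K_sub] gp_in_ssum by blast

lemma K_max: assumes "sub_smod G g0 gp M X" "K \<subseteq> X" "X \<noteq> K" shows "X = CM"
proof -
  have "X \<notin> Fam" using K_prop(2) assms(2,3) by blast
  then have "S0 \<subseteq> X" using assms(1) unfolding Fam_def by blast
  then show ?thesis using fin_gen[OF m0 assms(1)] by blast
qed

lemma K_proper: "\<exists>m1\<in>CM. m1 \<notin> K" using K_notS S0C by blast

lemma ex_inv: "\<exists>v0\<in>CM. v0 \<notin> K \<and> (\<forall>x\<in>gp. sact M x v0 \<in> K)"
proof -
  obtain m1 where m1: "m1 \<in> CM" "m1 \<notin> K" using K_proper by blast
  define D where "D = {w. set w \<subseteq> Bp \<and> distinct w \<and> act w m1 \<notin> K}"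
  have finD: "finite D" unfolding D_def
    by (rule finite_subset[OF _ finite_subset_distinct[OF Bp_fin]]) blast
  have neD: "[] \<in> D" unfolding D_def using m1 by simp
  define n where "n = Max (length ` D)"
  have "n \<in> length ` D" unfolding n_def using finD neD by (intro Max_in) auto
  then obtain w0 where w0: "w0 \<in> D" "length w0 = n" by blast
  have maxD: "length w \<le> n" if "w \<in> D" for w unfolding n_def using finD that by simp
  define v0 where "v0 = act w0 m1"
  have w0p: "set w0 \<subseteq> Bp" "distinct w0" "v0 \<notin> K" using w0 unfolding D_def v0_def by auto
  have v0C: "v0 \<in> CM" unfolding v0_def using w0p Bp_C m1 by simp
  have bK: "\<forall>b\<in>Bp. sact M b v0 \<in> K"
  proof
    fix b assume b: "b \<in> Bp"
    have e: "sact M b v0 = act (b#w0) m1" unfolding v0_def by simp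
    show "sact M b v0 \<in> K"
    proof (cases "b \<in> set w0")
      case True
      have "act (b#w0) m1 = zM"
        by (rule rep_zero[of gp]) (use True b w0p Bp_sub m1 in auto)
      then show ?thesis using e K_zero by simp
    next
      case False
      then have "b#w0 \<notin> D" using maxD[of "b#w0"] w0 by auto
      moreover have "set (b#w0) \<subseteq> Bp" "distinct (b#w0)" using b w0p False by auto
      ultimately have "act (b#w0) m1 \<in> K" unfolding D_def by blast
      then show ?thesis using e by simp
    qed
  qed
  have "\<forall>x\<in>gp. sact M x v0 \<in> K"
  proof
    fix x assume x: "x \<in> gp"
    show "sact M x v0 \<in> K" by (rule sact_span_sub[OF Bp_C gp_span[OF x] v0C K_cs bK])
  qed
  then show ?thesis using v0C w0p by blast
qed

lemma gp_kills: assumes x: "x \<in> gp" and u: "u \<in> CM" shows "sact M x u \<in> K"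
proof -
  obtain v0 where v0: "v0 \<in> CM" "v0 \<notin> K" "\<forall>x\<in>gp. sact M x v0 \<in> K" using ex_inv by blast
  define L where "L = {u\<in>CM. \<forall>x\<in>gp. sact M x u \<in> K}"
  have addL: "addM u u' \<in> L" if "u \<in> L" "u' \<in> L" for u u'
  proof -
    have "sact M x (addM u u') \<in> K" if "x \<in> gp" for x
    proof -
      have "sact M x (addM u u') = addM (sact M x u) (sact M x u')"
        by (rule sact_add) (use \<open>u \<in> L\<close> \<open>u' \<in> L\<close> that gp_sub in \<open>auto simp: L_def\<close>)
      then show ?thesis using K_add \<open>u \<in> L\<close> \<open>u' \<in> L\<close> that unfolding L_def by simp
    qed
    then show ?thesis using that unfolding L_def by simp
  qed
  have csL: "csubspace M L" unfolding csubspace_def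
  proof (intro conjI ballI allI)
    show "L \<subseteq> CM" unfolding L_def by blast
    show "zM \<in> L" unfolding L_def using K_zero gp_sub by auto
    show "addM x y \<in> L" if "x \<in> L" "y \<in> L" for x y using addL that by blast
    show "smM a x \<in> L" if "x \<in> L" for a x
    proof -
      have "sact M y (smM a x) \<in> K" if "y \<in> gp" for y
      proof -
        have "sact M y (smM a x) = smM a (sact M y x)"
          by (rule sact_sm) (use that \<open>x \<in> L\<close> gp_sub in \<open>auto simp: L_def\<close>)
        then show ?thesis using K_sm that \<open>x \<in> L\<close> unfolding L_def by simp
      qed
      then show ?thesis using that unfolding L_def by simp
    qed
  qed
  have grL: "a \<in> L \<and> b \<in> L" if u: "u \<in> L" and a: "a \<in> P0" and b: "b \<in> P1" and e: "u = addM a b" for u a b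
  proof -
    have KG: "\<forall>w\<in>K. \<forall>a b. a \<in> P0 \<longrightarrow> b \<in> P1 \<longrightarrow> w = addM a b \<longrightarrow> a \<in> K \<and> b \<in> K"
      using K_gr by blast
    have "sact M x a \<in> K \<and> sact M x b \<in> K" if x: "x \<in> gp" for x
    proof -
      have xh: "x \<in> hpart g0 Od True" using x gp_Od by auto
      have "sact M x a \<in> hpart P0 P1 (True \<noteq> False)" using sact_par[OF xh, of a False] a by simp
      then have xa: "sact M x a \<in> hpart P0 P1 True" by simp
      have "sact M x b \<in> hpart P0 P1 (True \<noteq> True)" using sact_par[OF xh, of b True] b by simp
      then have xb: "sact M x b \<in> hpart P0 P1 (\<not> True)" by simp
      have "sact M x u \<in> K" using u x unfolding L_def by blast
      moreover have "sact M x u = addM (sact M x a) (sact M x b)"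
        unfolding e by (rule sact_add) (use x gp_sub a b P0_sub P1_sub in auto)
      ultimately have "addM (sact M x a) (sact M x b) \<in> K" by simp
      then show ?thesis using split_hom[OF KG xa xb] by blast
    qed
    then show ?thesis unfolding L_def using a b P0_sub P1_sub by blast
  qed
  have stL: "sact M s u \<in> L" if s: "s \<in> ssum G g0 gp" and u: "u \<in> L" for s u
  proof -
    obtain z x' where zx: "z \<in> g0" "x' \<in> gp" "s = addG z x'" using s unfolding ssum_def by blast
    have uC: "u \<in> CM" using u unfolding L_def by blast
    have C: "z \<in> CG" "x' \<in> CG" using zx g0_sub gp_sub by auto
    have e: "sact M s u = addM (sact M z u) (sact M x' u)" unfolding zx(3) using sact_addx C uC by simp
    have "sact M z u \<in> L"
    proof -
      have "sact M x (sact M z u) \<in> K" if x: "x \<in> gp" for x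
      proof -
        have "sact M x (sact M z u) = addM (sact M (br x z) u) (sact M z (sact M x u))"
          by (rule comm_odd_even) (use x gp_Od zx uC in auto)
        moreover have "sact M (br x z) u \<in> K" using u br_gpg0[OF x zx(1)] unfolding L_def by blast
        moreover have "sact M z (sact M x u) \<in> K" using u x K_g0 zx(1) unfolding L_def by blast
        ultimately show ?thesis using K_add by simp
      qed
      then show ?thesis unfolding L_def using uC C by simp
    qed
    moreover have "sact M x' u \<in> L"
    proof -
      have "sact M x (sact M x' u) \<in> K" if x: "x \<in> gp" for x
      proof -
        have "sact M x (sact M x' u) = addM (sact M (br x x') u) (smM (-1) (sact M x' (sact M x u)))"
          by (rule comm_odd_odd) (use x gp_Od zx uC in auto)
        moreover have "sact M (br x x') u = zM" using br_gpgp[OF x zx(2)] uC by simp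
        moreover have "sact M x' (sact M x u) \<in> K" using u x K_gp zx(2) unfolding L_def by blast
        ultimately show ?thesis using K_add K_sm K_zero by simp
      qed
      then show ?thesis unfolding L_def using uC C by simp
    qed
    ultimately show ?thesis unfolding e using addL by blast
  qed
  have subL: "sub_smod G g0 gp M L" unfolding sub_smod_def using csL grL stL by blast
  have KL: "K \<subseteq> L" unfolding L_def using K_C K_gp by blast
  have "v0 \<in> L" unfolding L_def using v0 by blast
  then have "L \<noteq> K" using v0 by blast
  then have "L = CM" using K_max[OF subL KL] by blast
  then show ?thesis using u x unfolding L_def by blast
qed

end

context LS begin

definition "qc v = {addM v k | k. k \<in> K}"

lemma qc_self: "v \<in> CM \<Longrightarrow> v \<in> qc v"
  unfolding qc_def using K_zero by force

lemma qc_memD: "u \<in> qc v \<Longrightarrow> \<exists>k\<in>K. u = addM v k" unfolding qc_def by blast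

lemma qc_eqI: assumes v: "v \<in> CM" and k: "k \<in> K" shows "qc (addM v k) = qc v"
proof
  have kC: "k \<in> CM" using k K_C by blast
  show "qc (addM v k) \<subseteq> qc v"
  proof
    fix u assume "u \<in> qc (addM v k)"
    then obtain k' where k': "k' \<in> K" "u = addM (addM v k) k'" unfolding qc_def by blast
    have "u = addM v (addM k k')" using k' M.assoc v kC K_C by blast
    moreover have "addM k k' \<in> K" using K_add k k' by blast
    ultimately show "u \<in> qc v" unfolding qc_def by blast
  qed
  show "qc v \<subseteq> qc (addM v k)"
  proof
    fix u assume "u \<in> qc v"
    then obtain k' where k': "k' \<in> K" "u = addM v k'" unfolding qc_def by blast
    have k'C: "k' \<in> CM" using k' K_C by blast
    have "addM (addM v k) (addM (smM (-1) k) k') = addM v (addM (addM k (smM (-1) k)) k')"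
      using M.assoc v kC k'C M.sm_in M.add_in by metis
    also have "\<dots> = u" using kC k'C k' by simp
    finally have "u = addM (addM v k) (addM (smM (-1) k) k')" by simp
    moreover have "addM (smM (-1) k) k' \<in> K" using K_add K_sm k k' by blast
    ultimately show "u \<in> qc (addM v k)" unfolding qc_def by blast
  qed
qed

lemma qc_mem_eq: "v \<in> CM \<Longrightarrow> u \<in> qc v \<Longrightarrow> qc u = qc v"
  using qc_memD qc_eqI by metis

lemma qc_eqD: "u \<in> CM \<Longrightarrow> v \<in> CM \<Longrightarrow> qc u = qc v \<Longrightarrow> \<exists>k\<in>K. u = addM v k"
  using qc_self qc_memD by metis

lemma qc_zero: "qc zM = K"
  unfolding qc_def using K_C by force

lemma qc_K_iff: assumes v: "v \<in> CM" shows "qc v = K \<longleftrightarrow> v \<in> K"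
proof
  assume "qc v = K" then show "v \<in> K" using qc_self v by blast
next
  assume "v \<in> K"
  then have "qc (addM zM v) = qc zM" by (intro qc_eqI) simp_all
  then show "qc v = K" using v qc_zero by simp
qed

lemma qc_sub: "v \<in> CM \<Longrightarrow> qc v \<subseteq> CM" unfolding qc_def using K_C by auto

lemma lift1:
  assumes v: "v \<in> CM" and fC: "\<forall>u\<in>CM. f u \<in> CM"
    and fadd: "\<forall>k\<in>K. f (addM v k) = addM (f v) (f k)" and fK: "\<forall>k\<in>K. f k \<in> K"
  shows "(\<Union>a\<in>qc v. qc (f a)) = qc (f v)"
proof
  show "(\<Union>a\<in>qc v. qc (f a)) \<subseteq> qc (f v)"
  proof
    fix u assume "u \<in> (\<Union>a\<in>qc v. qc (f a))"
    then obtain a where a: "a \<in> qc v" "u \<in> qc (f a)" by blast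
    then obtain k where k: "k \<in> K" "a = addM v k" using qc_memD by blast
    then have "qc (f a) = qc (f v)" using fadd fK qc_eqI fC v by simp
    then show "u \<in> qc (f v)" using a by simp
  qed
  show "qc (f v) \<subseteq> (\<Union>a\<in>qc v. qc (f a))" using qc_self[OF v] by blast
qed

lemma lift2:
  assumes u: "u \<in> CM" and v: "v \<in> CM"
  shows "(\<Union>a\<in>qc u. \<Union>b\<in>qc v. qc (addM a b)) = qc (addM u v)"
proof
  show "(\<Union>a\<in>qc u. \<Union>b\<in>qc v. qc (addM a b)) \<subseteq> qc (addM u v)"
  proof
    fix x assume "x \<in> (\<Union>a\<in>qc u. \<Union>b\<in>qc v. qc (addM a b))"
    then obtain a b where ab: "a \<in> qc u" "b \<in> qc v" "x \<in> qc (addM a b)" by blast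
    obtain k where k: "k \<in> K" "a = addM u k" using qc_memD ab by blast
    obtain k' where k': "k' \<in> K" "b = addM v k'" using qc_memD ab by blast
    have C: "k \<in> CM" "k' \<in> CM" using k k' K_C by auto
    have "addM a b = addM (addM u v) (addM k k')" unfolding k k' by (rule M.swap4[OF u C(1) v C(2)])
    then have "qc (addM a b) = qc (addM u v)" using qc_eqI K_add k k' u v by simp
    then show "x \<in> qc (addM u v)" using ab by simp
  qed
  show "qc (addM u v) \<subseteq> (\<Union>a\<in>qc u. \<Union>b\<in>qc v. qc (addM a b))" using qc_self u v by blast
qed

definition N :: "('m set, 'g) smod" where
  "N = \<lparr> vcarrier = qc ` CM,
         vadd = (\<lambda>A B. \<Union>a\<in>A. \<Union>b\<in>B. qc (addM a b)),
         vsmult = (\<lambda>c A. \<Union>a\<in>A. qc (smM c a)),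
         vzero = K,
         spar0 = qc ` P0,
         spar1 = qc ` P1,
         sact = (\<lambda>x A. \<Union>a\<in>A. qc (sact M x a)) \<rparr>"

lemma N_simps: "vcarrier N = qc ` CM" "vzero N = K" "spar0 N = qc ` P0" "spar1 N = qc ` P1"
  unfolding N_def by simp_all

lemma N_add: "u \<in> CM \<Longrightarrow> v \<in> CM \<Longrightarrow> vadd N (qc u) (qc v) = qc (addM u v)"
  unfolding N_def using lift2 by simp

lemma N_sm: "v \<in> CM \<Longrightarrow> vsmult N c (qc v) = qc (smM c v)"
proof -
  assume v: "v \<in> CM"
  have "(\<Union>a\<in>qc v. qc (smM c a)) = qc (smM c v)"
  proof (rule lift1[OF v])
    show "\<forall>u\<in>CM. smM c u \<in> CM" by simp
    show "\<forall>k\<in>K. smM c (addM v k) = addM (smM c v) (smM c k)" using M.sm_add v K_C by blast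
    show "\<forall>k\<in>K. smM c k \<in> K" using K_sm by blast
  qed
  then show ?thesis unfolding N_def by simp
qed

lemma N_act: assumes x: "x \<in> CG" and xK: "\<forall>k\<in>K. sact M x k \<in> K" and v: "v \<in> CM"
  shows "sact N x (qc v) = qc (sact M x v)"
proof -
  have "(\<Union>a\<in>qc v. qc (sact M x a)) = qc (sact M x v)"
  proof (rule lift1[OF v])
    show "\<forall>u\<in>CM. sact M x u \<in> CM" using x by simp
    show "\<forall>k\<in>K. sact M x (addM v k) = addM (sact M x v) (sact M x k)" using sact_add x v K_C by blast
    show "\<forall>k\<in>K. sact M x k \<in> K" using xK .
  qed
  then show ?thesis unfolding N_def by simp
qed

lemma g0_K: "z \<in> g0 \<Longrightarrow> \<forall>k\<in>K. sact M z k \<in> K" using K_g0 by blast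

lemma N_act0: "z \<in> g0 \<Longrightarrow> v \<in> CM \<Longrightarrow> sact N z (qc v) = qc (sact M z v)"
  using N_act g0_K g0_sub by blast

lemma N_carrier_E: "X \<in> vcarrier N \<Longrightarrow> (\<And>v. v \<in> CM \<Longrightarrow> X = qc v \<Longrightarrow> P) \<Longrightarrow> P"
  unfolding N_simps by blast

lemma qcI: "v \<in> CM \<Longrightarrow> qc v \<in> vcarrier N" unfolding N_simps by blast

lemma N_rep: "X \<in> vcarrier N \<Longrightarrow> \<exists>v\<in>CM. X = qc v" unfolding N_simps by blast

lemma N1: "vzero N \<in> vcarrier N" using qcI[OF M.zero_in] unfolding qc_zero N_simps(2) .

lemma N2: assumes X: "X \<in> vcarrier N" and Y: "Y \<in> vcarrier N"
  shows "vadd N X Y \<in> vcarrier N" "vadd N X Y = vadd N Y X"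
   "vsmult N a (vadd N X Y) = vadd N (vsmult N a X) (vsmult N a Y)"
proof -
  obtain x where x: "x \<in> CM" "X = qc x" using N_rep[OF X] by blast
  obtain y where y: "y \<in> CM" "Y = qc y" using N_rep[OF Y] by blast
  show "vadd N X Y \<in> vcarrier N" unfolding x(2) y(2) N_add[OF x(1) y(1)] by (rule qcI) (simp add: x y)
  show "vadd N X Y = vadd N Y X" unfolding x(2) y(2) N_add[OF x(1) y(1)] N_add[OF y(1) x(1)]
    using M.comm[OF x(1) y(1)] by simp
  show "vsmult N a (vadd N X Y) = vadd N (vsmult N a X) (vsmult N a Y)"
    unfolding x(2) y(2) N_add[OF x(1) y(1)] N_sm[OF x(1)] N_sm[OF y(1)] N_sm[OF M.add_in[OF x(1) y(1)]]
      N_add[OF M.sm_in[OF x(1)] M.sm_in[OF y(1)]] M.sm_add[OF x(1) y(1)] by (rule refl)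
qed

lemma N3: assumes X: "X \<in> vcarrier N"
  shows "vadd N (vzero N) X = X" "vadd N X (qc (smM (-1) (SOME x. x \<in> CM \<and> X = qc x))) = vzero N"
    "qc (smM (-1) (SOME x. x \<in> CM \<and> X = qc x)) \<in> vcarrier N"
    "vsmult N 1 X = X" "vsmult N (a + b) X = vadd N (vsmult N a X) (vsmult N b X)"
    "vsmult N (a * b) X = vsmult N a (vsmult N b X)" "vsmult N a X \<in> vcarrier N"
proof -
  define x where "x = (SOME x. x \<in> CM \<and> X = qc x)"
  have x: "x \<in> CM" "X = qc x" using someI_ex[OF N_rep[OF X, unfolded Bex_def]] unfolding x_def by blast+
  show "vadd N (vzero N) X = X"
    unfolding x(2) N_simps(2) qc_zero[symmetric] N_add[OF M.zero_in x(1)] M.zero_add[OF x(1)] by (rule refl)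
  show "vadd N X (qc (smM (-1) (SOME x. x \<in> CM \<and> X = qc x))) = vzero N"
    unfolding x_def[symmetric] unfolding x(2) N_add[OF x(1) M.sm_in[OF x(1)]] M.add_neg[OF x(1)] N_simps(2) qc_zero by (rule refl)
  show "qc (smM (-1) (SOME x. x \<in> CM \<and> X = qc x)) \<in> vcarrier N"
    unfolding x_def[symmetric] by (rule qcI) (simp add: x)
  show "vsmult N 1 X = X" unfolding x(2) N_sm[OF x(1)] M.sm_one[OF x(1)] by (rule refl)
  show "vsmult N (a + b) X = vadd N (vsmult N a X) (vsmult N b X)"
    unfolding x(2) N_sm[OF x(1)] N_add[OF M.sm_in[OF x(1)] M.sm_in[OF x(1)]] M.add_sm[OF x(1)] by (rule refl)
  show "vsmult N (a * b) X = vsmult N a (vsmult N b X)"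
    unfolding x(2) N_sm[OF x(1)] N_sm[OF M.sm_in[OF x(1)]] M.sm_sm[OF x(1)] by (rule refl)
  show "vsmult N a X \<in> vcarrier N" unfolding x(2) N_sm[OF x(1)] by (rule qcI) (simp add: x)
qed

lemma N4: assumes X: "X \<in> vcarrier N" and Y: "Y \<in> vcarrier N" and Z: "Z \<in> vcarrier N"
  shows "vadd N (vadd N X Y) Z = vadd N X (vadd N Y Z)"
proof -
  obtain x where x: "x \<in> CM" "X = qc x" using N_rep[OF X] by blast
  obtain y where y: "y \<in> CM" "Y = qc y" using N_rep[OF Y] by blast
  obtain z where z: "z \<in> CM" "Z = qc z" using N_rep[OF Z] by blast
  show ?thesis
    unfolding x(2) y(2) z(2) N_add[OF x(1) y(1)] N_add[OF y(1) z(1)]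
      N_add[OF M.add_in[OF x(1) y(1)] z(1)] N_add[OF x(1) M.add_in[OF y(1) z(1)]] M.assoc[OF x(1) y(1) z(1)]
    by (rule refl)
qed

lemma cvs_N: "cvs N"
  unfolding cvs_def
proof (intro conjI ballI allI)
  show "vzero N \<in> vcarrier N" by (rule N1)
  fix X Y Z a b assume X: "X \<in> vcarrier N" and Y: "Y \<in> vcarrier N" and Z: "Z \<in> vcarrier N"
  show "vadd N X Y \<in> vcarrier N" by (rule N2(1)[OF X Y])
  show "vadd N X Y = vadd N Y X" by (rule N2(2)[OF X Y])
  show "vsmult N a (vadd N X Y) = vadd N (vsmult N a X) (vsmult N a Y)" by (rule N2(3)[OF X Y])
  show "vadd N (vadd N X Y) Z = vadd N X (vadd N Y Z)" by (rule N4[OF X Y Z])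
next
  fix X a b assume X: "X \<in> vcarrier N"
  show "vsmult N a X \<in> vcarrier N" by (rule N3(7)[OF X])
  show "vadd N (vzero N) X = X" by (rule N3(1)[OF X])
  show "\<exists>Y\<in>vcarrier N. vadd N X Y = vzero N" using N3(2,3)[OF X] by blast
  show "vsmult N (a + b) X = vadd N (vsmult N a X) (vsmult N b X)" by (rule N3(5)[OF X])
  show "vsmult N (a * b) X = vsmult N a (vsmult N b X)" by (rule N3(6)[OF X])
  show "vsmult N 1 X = X" by (rule N3(4)[OF X])
qed

sublocale N: cv N unfolding cv_def by (rule cvs_N)
end

context LS begin

lemma ssum_g0z: "ssum G g0 {zG} = g0"
proof
  show "ssum G g0 {zG} \<subseteq> g0" unfolding ssum_def using g0_sub by auto
  show "g0 \<subseteq> ssum G g0 {zG}"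
  proof
    fix x assume x: "x \<in> g0"
    then have "x = addG x zG" using g0_sub by auto
    then show "x \<in> ssum G g0 {zG}" unfolding ssum_def using x by blast
  qed
qed

lemma hpartN: "hpart (spar0 N) (spar1 N) q = qc ` hpart P0 P1 q"
  by (cases q) (simp_all add: N_simps)

lemma zM_P: "zM \<in> P0" "zM \<in> P1" using csubD(2)[OF csub_P0] csubD(2)[OF csub_P1] by auto

lemma csubN: assumes "csubspace M P" shows "csubspace N (qc ` P)"
proof -
  have PC: "P \<subseteq> CM" using csubD(1)[OF assms] .
  show ?thesis unfolding csubspace_def
  proof (intro conjI ballI allI)
    show "qc ` P \<subseteq> vcarrier N" unfolding N_simps using PC by blast
    show "vzero N \<in> qc ` P" unfolding N_simps qc_zero[symmetric] using csubD(2)[OF assms] by blast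
  next
    fix X Y assume "X \<in> qc ` P" "Y \<in> qc ` P"
    then obtain x y where xy: "x \<in> P" "y \<in> P" "X = qc x" "Y = qc y" by blast
    have "vadd N X Y = qc (addM x y)" unfolding xy(3,4) using N_add xy PC by blast
    then show "vadd N X Y \<in> qc ` P" using csubD(3)[OF assms xy(1,2)] by simp
  next
    fix a X assume "X \<in> qc ` P"
    then obtain x where xy: "x \<in> P" "X = qc x" by blast
    have "vsmult N a X = qc (smM a x)" unfolding xy(2) using N_sm xy PC by blast
    then show "vsmult N a X \<in> qc ` P" using csubD(4)[OF assms xy(1)] by simp
  qed
qed

lemma qc_split_unique:
  assumes a: "a \<in> P0" and a': "a' \<in> P0" and b: "b \<in> P1" and b': "b' \<in> P1"
    and e0: "qc (addM a b) = qc (addM a' b')"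
  shows "qc a = qc a' \<and> qc b = qc b'"
proof -
  have abC: "a \<in> CM" "b \<in> CM" using a b P0_sub P1_sub by auto
  have a'C: "a' \<in> CM" "b' \<in> CM" using a' b' P0_sub P1_sub by auto
  obtain k where k: "k \<in> K" "addM a b = addM (addM a' b') k"
    using qc_eqD[OF M.add_in[OF abC] M.add_in[OF a'C] e0] by blast
  have kC: "k \<in> CM" using k K_C by blast
  obtain k0 k1 where kk: "k0 \<in> P0" "k1 \<in> P1" "k = addM k0 k1" using decompM[OF kC] by blast
  have kK: "k0 \<in> K" "k1 \<in> K" using K_gr[OF k(1) kk] by auto
  have kkC: "k0 \<in> CM" "k1 \<in> CM" using kk P0_sub P1_sub by auto
  have e: "addM a b = addM (addM a' k0) (addM b' k1)"
    unfolding k(2) kk(3) by (rule M.swap4[OF a'C(1) a'C(2) kkC])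
  have "a = addM a' k0 \<and> b = addM b' k1"
  proof (rule dsum_unique[OF dsM a _ b _ e])
    show "addM a' k0 \<in> P0" using csubD(3)[OF csub_P0 a' kk(1)] .
    show "addM b' k1 \<in> P1" using csubD(3)[OF csub_P1 b' kk(2)] .
    show "addM a b \<in> CM" using abC by simp
  qed
  then have "qc a = qc (addM a' k0)" "qc b = qc (addM b' k1)" by simp_all
  then show ?thesis using qc_eqI[OF a'C(1) kK(1)] qc_eqI[OF a'C(2) kK(2)] by simp
qed

lemma dsum_N: "dsum N (spar0 N) (spar1 N) (vcarrier N)"
proof -
  have c0: "csubspace N (spar0 N)" unfolding N_simps by (rule csubN[OF csub_P0])
  have c1: "csubspace N (spar1 N)" unfolding N_simps by (rule csubN[OF csub_P1])
  have ss: "ssum N (spar0 N) (spar1 N) \<subseteq> vcarrier N"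
  proof
    fix X assume "X \<in> ssum N (spar0 N) (spar1 N)"
    then obtain A B where AB: "A \<in> spar0 N" "B \<in> spar1 N" "X = vadd N A B" unfolding ssum_def by blast
    have "A \<in> vcarrier N" "B \<in> vcarrier N" using AB csubD(1)[OF c0] csubD(1)[OF c1] by auto
    then show "X \<in> vcarrier N" using AB(3) N.add_in by simp
  qed
  have uq: "\<exists>!p. fst p \<in> spar0 N \<and> snd p \<in> spar1 N \<and> X = vadd N (fst p) (snd p)"
    if X: "X \<in> vcarrier N" for X
  proof -
    obtain v where v: "v \<in> CM" "X = qc v" using N_rep[OF X] by blast
    obtain a b where ab: "a \<in> P0" "b \<in> P1" "v = addM a b" using decompM[OF v(1)] by blast
    have abC: "a \<in> CM" "b \<in> CM" using ab P0_sub P1_sub by auto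
    have Xe: "X = qc (addM a b)" using v ab by simp
    show ?thesis
    proof (rule ex1I[of _ "(qc a, qc b)"])
      have "qc a \<in> spar0 N" "qc b \<in> spar1 N" unfolding N_simps using ab by auto
      moreover have "X = vadd N (qc a) (qc b)" unfolding Xe N_add[OF abC] ..
      ultimately show "fst (qc a, qc b) \<in> spar0 N \<and> snd (qc a, qc b) \<in> spar1 N \<and> X = vadd N (fst (qc a, qc b)) (snd (qc a, qc b))"
        by simp
    next
      fix p assume p: "fst p \<in> spar0 N \<and> snd p \<in> spar1 N \<and> X = vadd N (fst p) (snd p)"
      obtain a' where a': "a' \<in> P0" "fst p = qc a'" using p unfolding N_simps by blast
      obtain b' where b': "b' \<in> P1" "snd p = qc b'" using p unfolding N_simps by blast
      have a'C: "a' \<in> CM" "b' \<in> CM" using a' b' P0_sub P1_sub by auto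
      have "X = vadd N (qc a') (qc b')" using p a'(2) b'(2) by simp
      then have "qc (addM a b) = qc (addM a' b')" unfolding Xe N_add[OF a'C] .
      then have "qc a = qc a' \<and> qc b = qc b'" by (rule qc_split_unique[OF ab(1) a'(1) ab(2) b'(1)])
      then show "p = (qc a, qc b)" using a'(2) b'(2) by (simp add: prod_eq_iff)
    qed
  qed
  show ?thesis unfolding dsum_def by (intro conjI c0 c1 ss ballI uq)
qed

lemma hpart_z: "x \<in> hpart g0 {zG} p \<Longrightarrow> x \<in> g0 \<and> x \<in> hpart g0 Od p"
proof (cases p)
  case False then show "x \<in> hpart g0 {zG} p \<Longrightarrow> x \<in> g0 \<and> x \<in> hpart g0 Od p" by simp
next
  case True then show "x \<in> hpart g0 {zG} p \<Longrightarrow> x \<in> g0 \<and> x \<in> hpart g0 Od p"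
    using csubD(2)[OF csub_g0] csubD(2)[OF csub_Od] by simp
qed

lemma smod_N: "smod G br g0 {zG} N"
proof -
  have a1: "\<forall>x\<in>ssum G g0 {zG}. \<forall>V\<in>vcarrier N. sact N x V \<in> vcarrier N"
  proof (intro ballI)
    fix x V assume x: "x \<in> ssum G g0 {zG}" and V: "V \<in> vcarrier N"
    obtain v where v: "v \<in> CM" "V = qc v" using N_rep[OF V] by blast
    have x0: "x \<in> g0" using x ssum_g0z by simp
    show "sact N x V \<in> vcarrier N" unfolding v(2) N_act0[OF x0 v(1)]
      by (rule qcI) (use x0 g0_sub v in auto)
  qed
  have a2: "\<forall>x\<in>ssum G g0 {zG}. \<forall>a b. \<forall>V\<in>vcarrier N. \<forall>W\<in>vcarrier N.
        sact N x (vadd N (vsmult N a V) (vsmult N b W)) =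
        vadd N (vsmult N a (sact N x V)) (vsmult N b (sact N x W))"
  proof (intro ballI allI)
    fix x a b V W assume x: "x \<in> ssum G g0 {zG}" and V: "V \<in> vcarrier N" and W: "W \<in> vcarrier N"
    obtain v where v: "v \<in> CM" "V = qc v" using N_rep[OF V] by blast
    obtain w where w: "w \<in> CM" "W = qc w" using N_rep[OF W] by blast
    have x0: "x \<in> g0" using x ssum_g0z by simp
    have xC: "x \<in> CG" using x0 g0_sub by blast
    show "sact N x (vadd N (vsmult N a V) (vsmult N b W)) =
        vadd N (vsmult N a (sact N x V)) (vsmult N b (sact N x W))"
      unfolding v(2) w(2) N_sm[OF v(1)] N_sm[OF w(1)] N_add[OF M.sm_in[OF v(1)] M.sm_in[OF w(1)]]
        N_act0[OF x0 v(1)] N_act0[OF x0 w(1)] N_act0[OF x0 M.add_in[OF M.sm_in[OF v(1)] M.sm_in[OF w(1)]]]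
        N_sm[OF sact_in[OF xC v(1)]] N_sm[OF sact_in[OF xC w(1)]]
        N_add[OF M.sm_in[OF sact_in[OF xC v(1)]] M.sm_in[OF sact_in[OF xC w(1)]]]
        sact_lin[OF xC v(1) w(1)] by (rule refl)
  qed
  have a3: "\<forall>x\<in>ssum G g0 {zG}. \<forall>y\<in>ssum G g0 {zG}. \<forall>a b. \<forall>V\<in>vcarrier N.
        sact N (addG (smG a x) (smG b y)) V = vadd N (vsmult N a (sact N x V)) (vsmult N b (sact N y V))"
  proof (intro ballI allI)
    fix x y a b V assume x: "x \<in> ssum G g0 {zG}" and y: "y \<in> ssum G g0 {zG}" and V: "V \<in> vcarrier N"
    obtain v where v: "v \<in> CM" "V = qc v" using N_rep[OF V] by blast
    have x0: "x \<in> g0" "y \<in> g0" using x y ssum_g0z by auto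
    have xC: "x \<in> CG" "y \<in> CG" using x0 g0_sub by auto
    have s0: "addG (smG a x) (smG b y) \<in> g0"
      using csubD(3)[OF csub_g0 csubD(4)[OF csub_g0 x0(1)] csubD(4)[OF csub_g0 x0(2)]] .
    show "sact N (addG (smG a x) (smG b y)) V = vadd N (vsmult N a (sact N x V)) (vsmult N b (sact N y V))"
      unfolding v(2) N_act0[OF s0 v(1)] N_act0[OF x0(1) v(1)] N_act0[OF x0(2) v(1)]
        N_sm[OF sact_in[OF xC(1) v(1)]] N_sm[OF sact_in[OF xC(2) v(1)]]
        N_add[OF M.sm_in[OF sact_in[OF xC(1) v(1)]] M.sm_in[OF sact_in[OF xC(2) v(1)]]]
        sact_linx[OF xC v(1)] by (rule refl)
  qed
  have a4: "\<forall>p q x V. x \<in> hpart g0 {zG} p \<longrightarrow> V \<in> hpart (spar0 N) (spar1 N) q \<longrightarrow>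
        sact N x V \<in> hpart (spar0 N) (spar1 N) (p \<noteq> q)"
  proof (intro allI impI)
    fix p q x V assume x: "x \<in> hpart g0 {zG} p" and V: "V \<in> hpart (spar0 N) (spar1 N) q"
    obtain v where v: "v \<in> hpart P0 P1 q" "V = qc v" using V unfolding hpartN by blast
    have vC: "v \<in> CM" using v hpartM_sub by blast
    have xx: "x \<in> g0" "x \<in> hpart g0 Od p" using hpart_z[OF x] by auto
    have "sact M x v \<in> hpart P0 P1 (p \<noteq> q)" by (rule sact_par[OF xx(2) v(1)])
    then show "sact N x V \<in> hpart (spar0 N) (spar1 N) (p \<noteq> q)"
      unfolding v(2) N_act0[OF xx(1) vC] hpartN by blast
  qed
  have a5: "\<forall>p q x y. \<forall>V\<in>vcarrier N. x \<in> hpart g0 {zG} p \<longrightarrow> y \<in> hpart g0 {zG} q \<longrightarrow>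
        sact N (br x y) V =
        vadd N (sact N x (sact N y V)) (vsmult N (- ssgn p q) (sact N y (sact N x V)))"
  proof (intro allI ballI impI)
    fix p q x y V assume V: "V \<in> vcarrier N" and x: "x \<in> hpart g0 {zG} p" and y: "y \<in> hpart g0 {zG} q"
    obtain v where v: "v \<in> CM" "V = qc v" using N_rep[OF V] by blast
    have xx: "x \<in> g0" "x \<in> hpart g0 Od p" using hpart_z[OF x] by auto
    have yy: "y \<in> g0" "y \<in> hpart g0 Od q" using hpart_z[OF y] by auto
    have C: "x \<in> CG" "y \<in> CG" using xx yy g0_sub by auto
    have bC: "br x y \<in> CG" using br_in C by blast
    have bK: "\<forall>k\<in>K. sact M (br x y) k \<in> K"
    proof
      fix k assume k: "k \<in> K"
      have kC: "k \<in> CM" using k K_C by blast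
      have "sact M (br x y) k = addM (sact M x (sact M y k)) (smM (- ssgn p q) (sact M y (sact M x k)))"
        by (rule sact_br[OF xx(2) yy(2) kC])
      moreover have "sact M x (sact M y k) \<in> K" using K_g0 xx yy k by blast
      moreover have "sact M y (sact M x k) \<in> K" using K_g0 xx yy k by blast
      ultimately show "sact M (br x y) k \<in> K" using K_add K_sm by simp
    qed
    have i1: "sact M y v \<in> CM" "sact M x v \<in> CM" using C v by auto
    show "sact N (br x y) V =
        vadd N (sact N x (sact N y V)) (vsmult N (- ssgn p q) (sact N y (sact N x V)))"
      unfolding v(2) N_act[OF bC bK v(1)] N_act0[OF xx(1) v(1)] N_act0[OF yy(1) v(1)]
        N_act0[OF xx(1) i1(1)] N_act0[OF yy(1) i1(2)] N_sm[OF sact_in[OF C(2) i1(2)]]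
        N_add[OF sact_in[OF C(1) i1(1)] M.sm_in[OF sact_in[OF C(2) i1(2)]]]
        sact_br[OF xx(2) yy(2) v(1)] by (rule refl)
  qed
  show ?thesis unfolding smod_def using cvs_N dsum_N a1 a2 a3 a4 a5 by blast
qed

lemma simple_N: "simple_smod G br g0 {zG} N"
proof -
  have nt: "vcarrier N \<noteq> {vzero N}"
  proof
    assume h: "vcarrier N = {vzero N}"
    obtain m1 where m1: "m1 \<in> CM" "m1 \<notin> K" using K_proper by blast
    have "qc m1 \<in> vcarrier N" using qcI[OF m1(1)] .
    then have "qc m1 = K" using h N_simps by simp
    then show False using qc_K_iff[OF m1(1)] m1 by simp
  qed
  have sm: "W = {vzero N} \<or> W = vcarrier N" if W: "sub_smod G g0 {zG} N W" for W
  proof -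
    note Ws = sub_smodD[OF W]
    have WC: "W \<subseteq> vcarrier N" using csubD(1)[OF Ws(1)] .
    have KW: "K \<in> W" using csubD(2)[OF Ws(1)] N_simps by simp
    define W' where "W' = {v\<in>CM. qc v \<in> W}"
    have addW: "addM u v \<in> W'" if "u \<in> W'" "v \<in> W'" for u v
    proof -
      have C: "u \<in> CM" "v \<in> CM" "qc u \<in> W" "qc v \<in> W" using that unfolding W'_def by auto
      have "vadd N (qc u) (qc v) \<in> W" using csubD(3)[OF Ws(1) C(3,4)] .
      then have "qc (addM u v) \<in> W" unfolding N_add[OF C(1,2)] .
      then show ?thesis unfolding W'_def using C by simp
    qed
    have smW: "smM a u \<in> W'" if "u \<in> W'" for a u
    proof -
      have C: "u \<in> CM" "qc u \<in> W" using that unfolding W'_def by auto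
      have "vsmult N a (qc u) \<in> W" using csubD(4)[OF Ws(1) C(2)] .
      then have "qc (smM a u) \<in> W" unfolding N_sm[OF C(1)] .
      then show ?thesis unfolding W'_def using C by simp
    qed
    have csW: "csubspace M W'" unfolding csubspace_def
    proof (intro conjI ballI allI)
      show "W' \<subseteq> CM" unfolding W'_def by blast
      show "zM \<in> W'" unfolding W'_def using KW qc_zero by simp
    qed (use addW smW in blast)+
    have grW: "a \<in> W' \<and> b \<in> W'" if u: "u \<in> W'" and a: "a \<in> P0" and b: "b \<in> P1" and e: "u = addM a b" for u a b
    proof -
      have C: "a \<in> CM" "b \<in> CM" using a b P0_sub P1_sub by auto
      have "qc u = vadd N (qc a) (qc b)" using e N_add[OF C] by simp
      moreover have "qc a \<in> spar0 N" "qc b \<in> spar1 N" using a b N_simps by auto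
      moreover have "qc u \<in> W" using u unfolding W'_def by blast
      ultimately have "qc a \<in> W \<and> qc b \<in> W" using Ws(2) by blast
      then show ?thesis unfolding W'_def using C by blast
    qed
    have stW: "sact M s u \<in> W'" if s: "s \<in> ssum G g0 gp" and u: "u \<in> W'" for s u
    proof -
      obtain z x where zx: "z \<in> g0" "x \<in> gp" "s = addG z x" using s unfolding ssum_def by blast
      have uC: "u \<in> CM" using u unfolding W'_def by blast
      have C: "z \<in> CG" "x \<in> CG" using zx g0_sub gp_sub by auto
      have e: "sact M s u = addM (sact M z u) (sact M x u)" unfolding zx(3) by (rule sact_addx[OF C uC])
      have "qc (sact M s u) = qc (sact M z u)" unfolding e
        by (rule qc_eqI) (use gp_kills[OF zx(2) uC] C uC in simp_all)
      also have "\<dots> = sact N z (qc u)" using N_act0[OF zx(1) uC] by simp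
      finally have "qc (sact M s u) = sact N z (qc u)" .
      moreover have "sact N z (qc u) \<in> W"
      proof (rule Ws(3))
        show "z \<in> ssum G g0 {zG}" using zx(1) ssum_g0z by simp
        show "qc u \<in> W" using u unfolding W'_def by blast
      qed
      moreover have "sact M s u \<in> CM" using ssum_g0gp s uC by auto
      ultimately show ?thesis unfolding W'_def by simp
    qed
    have subW: "sub_smod G g0 gp M W'" unfolding sub_smod_def using csW grW stW by blast
    have KW': "K \<subseteq> W'"
    proof
      fix k assume k: "k \<in> K"
      then have "k \<in> CM" using K_C by blast
      moreover have "qc k = K" using qc_K_iff[OF calculation] k by simp
      ultimately show "k \<in> W'" unfolding W'_def using KW by simp
    qed
    show ?thesis
    proof (cases "W' = K")
      case True
      have "W \<subseteq> {K}"
      proof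
        fix X assume X: "X \<in> W"
        then obtain v where v: "v \<in> CM" "X = qc v" using N_rep WC by blast
        then have "v \<in> W'" unfolding W'_def using X by blast
        then have "v \<in> K" using True by simp
        then show "X \<in> {K}" using qc_K_iff v by simp
      qed
      then have "W = {K}" using KW by blast
      then show ?thesis using N_simps by simp
    next
      case False
      then have "W' = CM" using K_max[OF subW KW'] by blast
      have "vcarrier N \<subseteq> W"
      proof
        fix X assume X: "X \<in> vcarrier N"
        then obtain v where v: "v \<in> CM" "X = qc v" using N_rep by blast
        then have "v \<in> W'" using \<open>W' = CM\<close> by simp
        then show "X \<in> W" unfolding W'_def using v by blast
      qed
      then show ?thesis using WC by blast
    qed
  qed
  show ?thesis unfolding simple_smod_def using smod_N nt sm by blast
qed

end

lemma (in cv) add_sub_cancel: "x \<in> C \<Longrightarrow> k \<in> C \<Longrightarrow> ad (ad x k) (sm (-1) x) = k"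
proof -
  assume x: "x \<in> C" and k: "k \<in> C"
  have "ad (ad x k) (sm (-1) x) = ad (ad k x) (sm (-1) x)" using comm[OF x k] by simp
  also have "\<dots> = ad k (ad x (sm (-1) x))" using assoc x k by simp
  also have "\<dots> = k" using x k by simp
  finally show ?thesis .
qed

context LS begin

definition "phi v = (\<lambda>w. if set w \<subseteq> CG then qc (act w v) else K)"

abbreviation "CI \<equiv> coind G br gm g0 gp N"

lemma coind_simps:
  "vcarrier CI = {f \<in> hom_Ug G br g0 Od N.
                 (\<forall>x\<in>g0. \<forall>u. f (x # u) = sact N x (f u)) \<and> (\<forall>x\<in>gp. \<forall>u. f (x # u) = vzero N)}"
  "vadd CI = (\<lambda>f g w. vadd N (f w) (g w))"
  "vsmult CI = (\<lambda>a f w. vsmult N a (f w))"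
  "spar0 CI = {f \<in> vcarrier CI. \<forall>w p. hword g0 Od w p \<longrightarrow> f w \<in> hpart (spar0 N) (spar1 N) p}"
  "spar1 CI = {f \<in> vcarrier CI. \<forall>w p. hword g0 Od w p \<longrightarrow> f w \<in> hpart (spar0 N) (spar1 N) (\<not> p)}"
  "sact CI = (\<lambda>x f w. f (w @ [x]))"
  unfolding coind_def Let_def by simp_all

lemma NK: "vzero N = K" by (rule N_simps(2))
lemma K_in_N: "K \<in> vcarrier N" using N.zero_in unfolding NK .

lemma phi_in_N: "v \<in> CM \<Longrightarrow> phi v w \<in> vcarrier N"
  unfolding phi_def using qcI K_in_N by simp

lemma qc_act_lin: assumes u: "set u \<subseteq> CG" and X: "X \<in> CM" and Y: "Y \<in> CM"
  shows "qc (act u (addM (smM a X) (smM b Y))) = vadd N (vsmult N a (qc (act u X))) (vsmult N b (qc (act u Y)))"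
proof -
  have C: "act u X \<in> CM" "act u Y \<in> CM" using u X Y by auto
  have "act u (addM (smM a X) (smM b Y)) = addM (smM a (act u X)) (smM b (act u Y))"
    using act_add[OF u M.sm_in[OF X] M.sm_in[OF Y]] act_sm[OF u X] act_sm[OF u Y] by simp
  then show ?thesis using N_sm[OF C(1)] N_sm[OF C(2)] N_add[OF M.sm_in[OF C(1)] M.sm_in[OF C(2)]] by simp
qed

lemma phi_hom: assumes v: "v \<in> CM" shows "phi v \<in> hom_Ug G br g0 Od N"
  unfolding hom_Ug_def
proof (intro CollectI conjI allI ballI impI)
  fix w show "phi v w \<in> vcarrier N" using phi_in_N[OF v] .
next
  fix w assume "\<not> set w \<subseteq> CG" then show "phi v w = vzero N" unfolding phi_def NK by simp
next
  fix u w a b x y assume x: "x \<in> CG" and y: "y \<in> CG"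
  have z: "addG (smG a x) (smG b y) \<in> CG" using x y by simp
  show "phi v (u @ [addG (smG a x) (smG b y)] @ w) =
        vadd N (vsmult N a (phi v (u @ [x] @ w))) (vsmult N b (phi v (u @ [y] @ w)))"
  proof (cases "set u \<subseteq> CG \<and> set w \<subseteq> CG")
    case True
    have tC: "act w v \<in> CM" using True v by simp
    have "act (u @ [addG (smG a x) (smG b y)] @ w) v = act u (addM (smM a (sact M x (act w v))) (smM b (sact M y (act w v))))"
      using sact_linx[OF x y tC] by simp
    then have "phi v (u @ [addG (smG a x) (smG b y)] @ w) =
      vadd N (vsmult N a (qc (act u (sact M x (act w v))))) (vsmult N b (qc (act u (sact M y (act w v)))))"
      unfolding phi_def using True z qc_act_lin[OF _ sact_in[OF x tC] sact_in[OF y tC]] by simp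
    then show ?thesis unfolding phi_def using True x y by simp
  next
    case False
    then show ?thesis unfolding phi_def NK[symmetric] by auto
  qed
next
  fix u w p q x y assume x: "x \<in> hpart g0 Od p" and y: "y \<in> hpart g0 Od q"
  have C: "x \<in> CG" "y \<in> CG" using x y hpartG_sub by auto
  have bC: "br x y \<in> CG" using br_in C by blast
  show "phi v (u @ [x, y] @ w) = vadd N (vsmult N (ssgn p q) (phi v (u @ [y, x] @ w))) (phi v (u @ [br x y] @ w))"
  proof (cases "set u \<subseteq> CG \<and> set w \<subseteq> CG")
    case True
    define t where "t = act w v"
    have tC: "t \<in> CM" unfolding t_def using True v by simp
    have C2: "sact M x (sact M y t) \<in> CM" "sact M y (sact M x t) \<in> CM" "sact M (br x y) t \<in> CM"
      using C tC bC by auto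
    have h: "sact M (br x y) t = addM (sact M x (sact M y t)) (smM (- ssgn p q) (sact M y (sact M x t)))"
      by (rule sact_br[OF x y tC])
    have "sact M x (sact M y t) = addM (sact M (br x y) t) (smM (-1) (smM (- ssgn p q) (sact M y (sact M x t))))"
      by (rule M.eq_sub[OF C2(3) C2(1) M.sm_in[OF C2(2)] h])
    also have "smM (-1) (smM (- ssgn p q) (sact M y (sact M x t))) = smM (ssgn p q) (sact M y (sact M x t))"
      using M.sm_sm[OF C2(2), of "-1" "- ssgn p q"] by simp
    finally have e: "sact M x (sact M y t) = addM (smM (ssgn p q) (sact M y (sact M x t))) (smM 1 (sact M (br x y) t))"
      using M.comm C2 by simp
    have "qc (act u (sact M x (sact M y t))) =
       vadd N (vsmult N (ssgn p q) (qc (act u (sact M y (sact M x t))))) (vsmult N 1 (qc (act u (sact M (br x y) t))))"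
      unfolding e by (rule qc_act_lin[OF _ C2(2) C2(3)]) (use True in simp)
    also have "vsmult N 1 (qc (act u (sact M (br x y) t))) = qc (act u (sact M (br x y) t))"
      using True C2 qcI by simp
    finally show ?thesis unfolding phi_def t_def using True C bC by simp
  next
    case False
    then show ?thesis unfolding phi_def NK[symmetric] by auto
  qed
qed

lemma phi_in: assumes v: "v \<in> CM" shows "phi v \<in> vcarrier CI"
  unfolding coind_simps
proof (intro CollectI conjI ballI allI phi_hom[OF v])
  fix x u assume x: "x \<in> g0"
  have xC: "x \<in> CG" using x g0_sub by blast
  show "phi v (x # u) = sact N x (phi v u)"
  proof (cases "set u \<subseteq> CG")
    case True then show ?thesis unfolding phi_def using N_act0[OF x] xC v by simp
  next
    case False
    then show ?thesis unfolding phi_def using N_act0[OF x M.zero_in] qc_zero xC by simp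
  qed
next
  fix x u assume x: "x \<in> gp"
  have xC: "x \<in> CG" using x gp_sub by blast
  show "phi v (x # u) = vzero N"
  proof (cases "set u \<subseteq> CG")
    case True
    have "sact M x (act u v) \<in> K" using gp_kills[OF x] True v by simp
    then have "qc (sact M x (act u v)) = K" using qc_K_iff True v xC by simp
    then show ?thesis unfolding phi_def NK using True xC by simp
  next
    case False then show ?thesis unfolding phi_def NK by simp
  qed
qed

lemma hword_act: "hword g0 Od w r \<Longrightarrow> a \<in> hpart P0 P1 p \<Longrightarrow> set w \<subseteq> CG \<and> act w a \<in> hpart P0 P1 (p \<noteq> r)"
proof (induction w arbitrary: r)
  case Nil then show ?case by simp
next
  case (Cons x w)
  then obtain q where q: "x \<in> hpart g0 Od q" "hword g0 Od w (r \<noteq> q)" by auto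
  have IH: "set w \<subseteq> CG" "act w a \<in> hpart P0 P1 (p \<noteq> (r \<noteq> q))"
    using Cons.IH[OF q(2) Cons.prems(2)] by auto
  have "sact M x (act w a) \<in> hpart P0 P1 (q \<noteq> (p \<noteq> (r \<noteq> q)))" by (rule sact_par[OF q(1) IH(2)])
  moreover have "(q \<noteq> (p \<noteq> (r \<noteq> q))) = (p \<noteq> r)" by blast
  moreover have "x \<in> CG" using q hpartG_sub by blast
  ultimately show ?case using IH by simp
qed

lemma phi_hom_smod: "smod_hom G g0 Od M CI phi"
  unfolding smod_hom_def
proof (intro conjI ballI allI)
  fix v assume "v \<in> CM" then show "phi v \<in> vcarrier CI" by (rule phi_in)
next
  fix u v assume u: "u \<in> CM" and v: "v \<in> CM"
  show "phi (addM u v) = vadd CI (phi u) (phi v)"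
    unfolding coind_simps
  proof (rule ext)
    fix w show "phi (addM u v) w = vadd N (phi u w) (phi v w)"
    proof (cases "set w \<subseteq> CG")
      case True
      then show ?thesis unfolding phi_def using act_add[OF True u v] N_add u v by simp
    next
      case False then show ?thesis unfolding phi_def NK[symmetric] by simp
    qed
  qed
next
  fix a v assume v: "v \<in> CM"
  show "phi (smM a v) = vsmult CI a (phi v)"
    unfolding coind_simps
  proof (rule ext)
    fix w show "phi (smM a v) w = vsmult N a (phi v w)"
    proof (cases "set w \<subseteq> CG")
      case True
      then show ?thesis unfolding phi_def using act_sm[OF True v] N_sm v by simp
    next
      case False then show ?thesis unfolding phi_def NK[symmetric] by simp
    qed
  qed
next
  show "phi ` P0 \<subseteq> spar0 CI"
  proof
    fix f assume "f \<in> phi ` P0"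
    then obtain v where v: "v \<in> P0" "f = phi v" by blast
    have vC: "v \<in> CM" using v P0_sub by blast
    have "\<forall>w p. hword g0 Od w p \<longrightarrow> phi v w \<in> hpart (spar0 N) (spar1 N) p"
    proof (intro allI impI)
      fix w p assume h: "hword g0 Od w p"
      have "set w \<subseteq> CG \<and> act w v \<in> hpart P0 P1 (False \<noteq> p)" using hword_act[OF h, of v False] v by simp
      then show "phi v w \<in> hpart (spar0 N) (spar1 N) p" unfolding phi_def hpartN by simp
    qed
    then show "f \<in> spar0 CI" unfolding coind_simps(4) using phi_in[OF vC] v by simp
  qed
next
  show "phi ` P1 \<subseteq> spar1 CI"
  proof
    fix f assume "f \<in> phi ` P1"
    then obtain v where v: "v \<in> P1" "f = phi v" by blast
    have vC: "v \<in> CM" using v P1_sub by blast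
    have "\<forall>w p. hword g0 Od w p \<longrightarrow> phi v w \<in> hpart (spar0 N) (spar1 N) (\<not> p)"
    proof (intro allI impI)
      fix w p assume h: "hword g0 Od w p"
      have "set w \<subseteq> CG \<and> act w v \<in> hpart P0 P1 (True \<noteq> p)" using hword_act[OF h, of v True] v by simp
      then show "phi v w \<in> hpart (spar0 N) (spar1 N) (\<not> p)" unfolding phi_def hpartN by simp
    qed
    then show "f \<in> spar1 CI" unfolding coind_simps(5) using phi_in[OF vC] v by simp
  qed
next
  fix x v assume x: "x \<in> ssum G g0 Od" and v: "v \<in> CM"
  have xC: "x \<in> CG" using x CG_ssum by simp
  show "phi (sact M x v) = sact CI x (phi v)"
    unfolding coind_simps
  proof (rule ext)
    fix w show "phi (sact M x v) w = phi v (w @ [x])"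
      unfolding phi_def using xC by simp
  qed
qed

lemma phi_inj: "inj_on phi CM"
proof -
  define Kh where "Kh = {v\<in>CM. \<forall>w. set w \<subseteq> g0 \<union> Od \<longrightarrow> act w v \<in> K}"
  have wC: "\<And>w. set w \<subseteq> g0 \<union> Od \<Longrightarrow> set w \<subseteq> CG" using g0_sub Od_sub by blast
  have addK: "addM u v \<in> Kh" if "u \<in> Kh" "v \<in> Kh" for u v
  proof -
    have C: "u \<in> CM" "v \<in> CM" using that unfolding Kh_def by auto
    have "act w (addM u v) \<in> K" if w: "set w \<subseteq> g0 \<union> Od" for w
    proof -
      have "act w u \<in> K" "act w v \<in> K" using \<open>u \<in> Kh\<close> \<open>v \<in> Kh\<close> w unfolding Kh_def by auto
      then show ?thesis using act_add[OF wC[OF w] C] K_add by simp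
    qed
    then show ?thesis unfolding Kh_def using C by simp
  qed
  have csK: "csubspace M Kh" unfolding csubspace_def
  proof (intro conjI ballI allI)
    show "Kh \<subseteq> CM" unfolding Kh_def by blast
    show "zM \<in> Kh" unfolding Kh_def using wC K_zero by simp
    show "addM x y \<in> Kh" if "x \<in> Kh" "y \<in> Kh" for x y using addK that by blast
    show "smM a x \<in> Kh" if "x \<in> Kh" for a x
    proof -
      have C: "x \<in> CM" using that unfolding Kh_def by auto
      have "act w (smM a x) \<in> K" if w: "set w \<subseteq> g0 \<union> Od" for w
      proof -
        have "act w x \<in> K" using \<open>x \<in> Kh\<close> w unfolding Kh_def by auto
        then show ?thesis using act_sm[OF wC[OF w] C] K_sm by simp
      qed
      then show ?thesis unfolding Kh_def using C by simp
    qed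
  qed
  have grK: "a \<in> Kh \<and> b \<in> Kh" if u: "u \<in> Kh" and a: "a \<in> P0" and b: "b \<in> P1" and e: "u = addM a b" for u a b
  proof -
    have gr: "\<forall>w\<in>K. \<forall>a b. a \<in> P0 \<longrightarrow> b \<in> P1 \<longrightarrow> w = addM a b \<longrightarrow> a \<in> K \<and> b \<in> K"
      using K_gr by blast
    have "act w a \<in> K \<and> act w b \<in> K" if w: "set w \<subseteq> g0 \<union> Od" for w
    proof (rule act_graded[OF gr w a b])
      show "act w (addM a b) \<in> K" using u w e unfolding Kh_def by blast
    qed
    then show ?thesis unfolding Kh_def using a b P0_sub P1_sub by blast
  qed
  have stK: "sact M x u \<in> Kh" if x: "x \<in> ssum G g0 Od" and u: "u \<in> Kh" for x u
  proof -
    obtain a b where ab: "a \<in> g0" "b \<in> Od" "x = addG a b" using x unfolding ssum_def by blast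
    have uC: "u \<in> CM" using u unfolding Kh_def by blast
    have C: "a \<in> CG" "b \<in> CG" using ab g0_sub Od_sub by auto
    have one: "sact M c u \<in> Kh" if c: "c \<in> g0 \<union> Od" for c
    proof -
      have cC: "c \<in> CG" using c g0_sub Od_sub by blast
      have "act w (sact M c u) \<in> K" if w: "set w \<subseteq> g0 \<union> Od" for w
      proof -
        have "set (w @ [c]) \<subseteq> g0 \<union> Od" using w c by simp
        then have "act (w @ [c]) u \<in> K" using u unfolding Kh_def by blast
        then show ?thesis by simp
      qed
      then show ?thesis unfolding Kh_def using cC uC by simp
    qed
    have "sact M x u = addM (sact M a u) (sact M b u)" unfolding ab(3) by (rule sact_addx[OF C uC])
    moreover have "sact M a u \<in> Kh" "sact M b u \<in> Kh" using one ab by auto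
    ultimately show ?thesis using addK by simp
  qed
  have subK: "sub_smod G g0 Od M Kh" unfolding sub_smod_def using csK grK stK by blast
  have KhK: "Kh \<subseteq> K"
  proof
    fix v assume "v \<in> Kh"
    then have "\<forall>w. set w \<subseteq> g0 \<union> Od \<longrightarrow> act w v \<in> K" unfolding Kh_def by blast
    then have "act [] v \<in> K" by (metis empty_set empty_subsetI)
    then show "v \<in> K" by simp
  qed
  have "Kh \<noteq> CM" using KhK K_proper by blast
  then have Kh0: "Kh = {zM}" using M_simple[OF subK] by blast
  show ?thesis
  proof (rule inj_onI)
    fix u v assume u: "u \<in> CM" and v: "v \<in> CM" and e: "phi u = phi v"
    define d where "d = addM u (smM (-1) v)"
    have dC: "d \<in> CM" unfolding d_def using u v by simp
    have "act w d \<in> K" if w: "set w \<subseteq> g0 \<union> Od" for w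
    proof -
      have wc: "set w \<subseteq> CG" using wC[OF w] .
      have "phi u w = phi v w" using e by simp
      then have "qc (act w u) = qc (act w v)" unfolding phi_def using wc by simp
      then obtain k where k: "k \<in> K" "act w u = addM (act w v) k"
        using qc_eqD[OF act_in[OF wc u] act_in[OF wc v]] by blast
      have kC: "k \<in> CM" using k K_C by blast
      have "act w d = addM (act w u) (smM (-1) (act w v))"
        unfolding d_def using act_add[OF wc u M.sm_in[OF v]] act_sm[OF wc v] by simp
      also have "\<dots> = k" unfolding k(2) by (rule M.add_sub_cancel) (use wc v kC in simp_all)
      finally show ?thesis using k by simp
    qed
    then have "d \<in> Kh" unfolding Kh_def using dC by simp
    then have "d = zM" using Kh0 by simp
    then have "smM (-1) v = smM (-1) u" unfolding d_def using M.neg_unique u v by simp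
    then have "smM (-1) (smM (-1) v) = smM (-1) (smM (-1) u)" by simp
    then show "u = v" using M.sm_neg_neg u v by simp
  qed
qed

end

theorem lemma4p2:
  fixes G :: "'g cvs" and br :: "'g \<Rightarrow> 'g \<Rightarrow> 'g" and gm g0 gp :: "'g set"
    and M :: "('m, 'g) smod"
  assumes "zgraded_lsa G br gm g0 gp"
    and "fin_dim G (ssum G gm gp)"
    and "simple_smod G br g0 (ssum G gm gp) M"
  shows "\<exists>(N :: ('m set, 'g) smod) \<phi>.
           simple_smod G br g0 {vzero G} N \<and>
           smod_hom G g0 (ssum G gm gp) M (coind G br gm g0 gp N) \<phi> \<and>
           inj_on \<phi> (vcarrier M)"
proof -
  interpret L: LS G br gm g0 gp M by (rule LS.intro) (rule assms)+
  show ?thesis using L.simple_N L.phi_hom_smod L.phi_inj by blast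
qed

end
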